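(* Let $n=1$ and assume $\delta_1\in[1/2,1)$. Then there is $\lambda>0$ such that, for each sign $\pm$, \[ \int_{C_t^\pm}\Gamma_\delta(\varphi)(x)\,dx\ \ge\ \lambda\,t^{-2}\int_{C_t^\pm}\big(\varphi(x)-\langle\varphi\rangle_\pm\big)^2dx \] for all $\varphi\in C_c^1(\mathbb R^{1+m})$ and all $t>0$, where $\langle\varphi\rangle_\pm=|C_t^\pm|^{-1}\int_{C_t^\pm}\varphi$.
   Context: Let $m\ge1$, $x=(x_1,x_2)\in\mathbb R\times\mathbb R^m$, $|\cdot|$ Euclidean norms and $|\cdot|_\infty$ the $\ell_\infty$-norm. For $a\ge0$, $a^{(\alpha,\alpha')}=a^\alpha$ if $a\le1$ and $a^{\alpha'}$ if $a\ge1$. Fix $\delta_1,\delta_1'\in[0,1)$, $\delta_2,\delta_2'\ge0$; $\Gamma_\delta(\varphi)(x)=|x_1|^{(2\delta_1,2\delta_1')}|\partial_{x_1}\varphi(x)|^2+|x_1|^{(2\delta_2,2\delta_2')}|\nabla_{x_2}\varphi(x)|^2$. Let $\alpha=(1-\delta_1)^{-1}$, $\alpha'=(1-\delta_1')^{-1}$, $\beta=(1+\delta_2-\delta_1)\alpha$, $\beta'=(1+\delta_2'-\delta_1')\alpha'$, $C_t=\{x:|x_1|<t^{(\alpha,\alpha')},\ |x_2|_\infty<t^{(\beta,\beta')}\}$, $C_t^+=C_t\cap\{x_1>0\}$, $C_t^-=C_t\cap\{x_1<0\}$. *)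

theory Defs
  imports "HOL-Analysis.Analysis"
begin

type_synonym 'm pt = "real \<times> (real ^ 'm)"

definition ppow :: "real \<Rightarrow> real \<Rightarrow> real \<Rightarrow> real" where
  "ppow a al al' = (if a \<le> 1 then a powr al else a powr al')"

definition Cc1 :: "('m::finite pt \<Rightarrow> real) \<Rightarrow> bool" where
  "Cc1 \<phi> \<longleftrightarrow>
     (\<exists>f'. (\<forall>x. (\<phi> has_derivative blinfun_apply (f' x)) (at x)) \<and> continuous_on UNIV f')
     \<and> compact (closure {x. \<phi> x \<noteq> 0})"

definition d1 :: "('m::finite pt \<Rightarrow> real) \<Rightarrow> 'm pt \<Rightarrow> real" where
  "d1 \<phi> x = frechet_derivative \<phi> (at x) (1, 0)"

definition grad2sq :: "('m::finite pt \<Rightarrow> real) \<Rightarrow> 'm pt \<Rightarrow> real" where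
  "grad2sq \<phi> x = (\<Sum>i\<in>(Basis :: (real^'m) set). (frechet_derivative \<phi> (at x) (0, i))\<^sup>2)"

definition Gamma_delta ::
  "real \<Rightarrow> real \<Rightarrow> real \<Rightarrow> real \<Rightarrow> ('m::finite pt \<Rightarrow> real) \<Rightarrow> 'm pt \<Rightarrow> real" where
  "Gamma_delta d1' d1'' d2 d2' \<phi> x =
     ppow \<bar>fst x\<bar> (2*d1') (2*d1'') * (d1 \<phi> x)\<^sup>2
   + ppow \<bar>fst x\<bar> (2*d2) (2*d2') * grad2sq \<phi> x"

definition Cbox :: "real \<Rightarrow> real \<Rightarrow> real \<Rightarrow> real \<Rightarrow> real \<Rightarrow> ('m::finite) pt set" where
  "Cbox d1' d1'' d2 d2' t =
    (let a = 1 / (1 - d1'); a' = 1 / (1 - d1'');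
         b = (1 + d2 - d1') * a; b' = (1 + d2' - d1'') * a'
     in {x. \<bar>fst x\<bar> < ppow t a a' \<and> (\<forall>i. \<bar>snd x $ i\<bar> < ppow t b b')})"

definition Cplus :: "real \<Rightarrow> real \<Rightarrow> real \<Rightarrow> real \<Rightarrow> real \<Rightarrow> ('m::finite) pt set" where
  "Cplus d1' d1'' d2 d2' t = Cbox d1' d1'' d2 d2' t \<inter> {x. fst x > 0}"

definition Cminus :: "real \<Rightarrow> real \<Rightarrow> real \<Rightarrow> real \<Rightarrow> real \<Rightarrow> ('m::finite) pt set" where
  "Cminus d1' d1'' d2 d2' t = Cbox d1' d1'' d2 d2' t \<inter> {x. fst x < 0}"

end

theory Submission
  imports Defs
begin

lemma hardy_piece:
  fixes g g' :: "real \<Rightarrow> real" and p q L c :: real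
  assumes pq: "p \<le> q"
    and dg: "\<And>x. (g has_real_derivative g' x) (at x)"
    and cg: "continuous_on UNIV g'"
    and Fq: "(q - L) * (g q - c)^2 = 0" and Fp: "(p - L) * (g p - c)^2 = 0"
  shows "integral {p..q} (\<lambda>x. (g x - c)^2) \<le> 4 * integral {p..q} (\<lambda>x. (x - L)^2 * (g' x)^2)"
proof -
  have cgg: "continuous_on UNIV g" using dg
    by (meson DERIV_isCont continuous_at_imp_continuous_on)
  let ?F = "\<lambda>x. (x - L) * (g x - c)^2"
  let ?F' = "\<lambda>x. (g x - c)^2 + 2 * (x - L) * (g x - c) * g' x"
  have der: "(?F has_real_derivative ?F' x) (at x)" for x
    by (rule derivative_eq_intros dg refl | simp)+
  have "(?F' has_integral (?F q - ?F p)) {p..q}"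
    apply (rule fundamental_theorem_of_calculus[OF pq])
    using der by (simp add: has_real_derivative_iff_has_vector_derivative[symmetric] has_field_derivative_at_within)
  hence I0: "integral {p..q} ?F' = 0" using Fp Fq by (simp add: integral_unique)
  have c1: "continuous_on {p..q} (\<lambda>x. (g x - c)^2)"
    by (intro continuous_intros continuous_on_subset[OF cgg]) auto
  have c2: "continuous_on {p..q} (\<lambda>x. 2 * (x - L) * (g x - c) * g' x)"
    by (intro continuous_intros continuous_on_subset[OF cgg] continuous_on_subset[OF cg]) auto
  have c3: "continuous_on {p..q} (\<lambda>x. (x - L)^2 * (g' x)^2)"
    by (intro continuous_intros continuous_on_subset[OF cg]) auto
  note i1 = integrable_continuous_interval[OF c1]
  note i2 = integrable_continuous_interval[OF c2]
  note i3 = integrable_continuous_interval[OF c3]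
  have "integral {p..q} ?F' = integral {p..q} (\<lambda>x. (g x - c)^2) + integral {p..q} (\<lambda>x. 2 * (x - L) * (g x - c) * g' x)"
    by (rule integral_add[OF i1 i2])
  hence e1: "integral {p..q} (\<lambda>x. (g x - c)^2) = - integral {p..q} (\<lambda>x. 2 * (x - L) * (g x - c) * g' x)"
    using I0 by linarith
  have "- integral {p..q} (\<lambda>x. 2 * (x - L) * (g x - c) * g' x) = integral {p..q} (\<lambda>x. - (2 * (x - L) * (g x - c) * g' x))"
    by (simp add: integral_neg)
  also have "\<dots> \<le> integral {p..q} (\<lambda>x. (1/2) * (g x - c)^2 + 2 * ((x - L)^2 * (g' x)^2))"
  proof (rule integral_le)
    show "(\<lambda>x. - (2 * (x - L) * (g x - c) * g' x)) integrable_on {p..q}"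
      using i2 by (rule integrable_neg)
    show "(\<lambda>x. (1/2) * (g x - c)^2 + 2 * ((x - L)^2 * (g' x)^2)) integrable_on {p..q}"
      by (intro integrable_add integrable_on_mult_right i1 i3)
    fix x
    have "0 \<le> 2 * ((g x - c) / 2 + (x - L) * g' x)^2" by simp
    thus "- (2 * (x - L) * (g x - c) * g' x) \<le> (1/2) * (g x - c)^2 + 2 * ((x - L)^2 * (g' x)^2)"
    proof -
      have "2 * ((g x - c) / 2 + (x - L) * g' x)^2 = (1/2) * (g x - c)^2 + 2 * ((x - L)^2 * (g' x)^2) + 2 * (x - L) * (g x - c) * g' x"
        by (simp add: power2_eq_square field_simps)
      thus ?thesis using \<open>0 \<le> _\<close> by linarith
    qed
  qed
  also have "\<dots> = (1/2) * integral {p..q} (\<lambda>x. (g x - c)^2) + 2 * integral {p..q} (\<lambda>x. (x - L)^2 * (g' x)^2)"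
    by (subst integral_add) (auto intro!: integrable_on_mult_right i1 i3)
  finally show ?thesis using e1 by linarith
qed

lemma hardy_1d:
  fixes g g' :: "real \<Rightarrow> real" and a b s :: real
  assumes as: "a \<le> s" and sb: "s \<le> b"
    and dg: "\<And>x. (g has_real_derivative g' x) (at x)"
    and cg: "continuous_on UNIV g'"
    and w1: "\<And>x. x \<in> {a..s} \<Longrightarrow> (x - a)^2 \<le> x^2"
    and w2: "\<And>x. x \<in> {s..b} \<Longrightarrow> (x - b)^2 \<le> x^2"
  shows "integral {a..b} (\<lambda>x. (g x - g s)^2) \<le> 4 * integral {a..b} (\<lambda>x. x^2 * (g' x)^2)"
proof -
  have cgg: "continuous_on UNIV g" using dg
    by (meson DERIV_isCont continuous_at_imp_continuous_on)
  have c1: "continuous_on UNIV (\<lambda>x. (g x - g s)^2)"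
    by (intro continuous_intros cgg)
  have c3: "continuous_on UNIV (\<lambda>x. x^2 * (g' x)^2)"
    by (intro continuous_intros cg)
  have c4: "continuous_on UNIV (\<lambda>x. (x - L)^2 * (g' x)^2)" for L
    by (intro continuous_intros cg)
  have int: "f integrable_on {p..q}" if "continuous_on UNIV f" for f :: "real \<Rightarrow> real" and p q
    by (rule integrable_continuous_interval) (rule continuous_on_subset[OF that], simp)
  have P1: "integral {a..s} (\<lambda>x. (g x - g s)^2) \<le> 4 * integral {a..s} (\<lambda>x. (x - a)^2 * (g' x)^2)"
    by (rule hardy_piece[OF as dg cg]) auto
  have P2: "integral {s..b} (\<lambda>x. (g x - g s)^2) \<le> 4 * integral {s..b} (\<lambda>x. (x - b)^2 * (g' x)^2)"
    by (rule hardy_piece[OF sb dg cg]) auto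
  have Q1: "integral {a..s} (\<lambda>x. (x - a)^2 * (g' x)^2) \<le> integral {a..s} (\<lambda>x. x^2 * (g' x)^2)"
    by (rule integral_le[OF int[OF c4] int[OF c3]]) (auto intro!: mult_right_mono w1)
  have Q2: "integral {s..b} (\<lambda>x. (x - b)^2 * (g' x)^2) \<le> integral {s..b} (\<lambda>x. x^2 * (g' x)^2)"
    by (rule integral_le[OF int[OF c4] int[OF c3]]) (auto intro!: mult_right_mono w2)
  have "integral {a..b} (\<lambda>x. (g x - g s)^2) = integral {a..s} (\<lambda>x. (g x - g s)^2) + integral {s..b} (\<lambda>x. (g x - g s)^2)"
    by (rule Henstock_Kurzweil_Integration.integral_combine[OF as sb int[OF c1], symmetric])
  moreover have "integral {a..b} (\<lambda>x. x^2 * (g' x)^2) = integral {a..s} (\<lambda>x. x^2 * (g' x)^2) + integral {s..b} (\<lambda>x. x^2 * (g' x)^2)"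
    by (rule Henstock_Kurzweil_Integration.integral_combine[OF as sb int[OF c3], symmetric])
  ultimately show ?thesis using P1 P2 Q1 Q2 by linarith
qed

lemma nn_integral_cont_interval:
  fixes f :: "real \<Rightarrow> real"
  assumes cf: "continuous_on UNIV f" and nn: "\<And>x. 0 \<le> f x" and ab: "a \<le> b"
  shows "(\<integral>\<^sup>+x. ennreal (f x) * indicator {a<..<b} x \<partial>lborel) = ennreal (integral {a..b} f)"
proof -
  have "(\<integral>\<^sup>+x. ennreal (f x) * indicator {a<..<b} x \<partial>lborel) = (\<integral>\<^sup>+x. ennreal (f x) * indicator {a..b} x \<partial>lborel)"
  proof (rule nn_integral_cong_AE)
    have "AE x in lborel. x \<noteq> a" "AE x in lborel. x \<noteq> b" by (auto intro: AE_lborel_singleton)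
    thus "AE x in lborel. ennreal (f x) * indicator {a<..<b} x = ennreal (f x) * indicator {a..b} x"
      by eventually_elim (auto split: split_indicator)
  qed
  also have "\<dots> = (\<integral>\<^sup>+x. ennreal (indicator {a..b} x *\<^sub>R f x) \<partial>lborel)"
    by (rule nn_integral_cong) (auto split: split_indicator)
  also have "\<dots> = ennreal (integral {a..b} f)"
  proof (rule nn_integral_has_integral_lborel)
    show "(\<lambda>x. indicator {a..b} x *\<^sub>R f x) \<in> borel_measurable borel"
      by (rule borel_measurable_continuous_on_indicator) (auto intro: continuous_on_subset[OF cf])
    show "0 \<le> indicator {a..b} x *\<^sub>R f x" for x using nn by (simp split: split_indicator)
    have hi: "(f has_integral integral {a..b} f) {a..b}"
      by (rule integrable_integral, rule integrable_continuous_interval, rule continuous_on_subset[OF cf], simp)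
    show "((\<lambda>x. indicator {a..b} x *\<^sub>R f x) has_integral integral {a..b} f) UNIV"
    proof -
      have "(\<lambda>x. indicator {a..b} x *\<^sub>R f x) = (\<lambda>x. if x \<in> {a..b} then f x else 0)"
        by (auto simp: indicator_def)
      thus ?thesis using hi has_integral_restrict_UNIV by metis
    qed
  qed
  finally show ?thesis .
qed

lemma seg_ineq:
  fixes \<psi> :: "'a::euclidean_space \<Rightarrow> real" and f' :: "'a \<Rightarrow> 'a \<Rightarrow>\<^sub>L real"
  assumes d: "\<And>z. (\<psi> has_derivative blinfun_apply (f' z)) (at z)"
    and cf: "continuous_on UNIV f'"
  shows "(\<psi> u - \<psi> v)^2 \<le> integral {0..1} (\<lambda>\<tau>. (f' (v + \<tau> *\<^sub>R (u - v)) (u - v))^2)"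
proof -
  let ?g = "\<lambda>\<tau>::real. \<psi> (v + \<tau> *\<^sub>R (u - v))"
  let ?h = "\<lambda>\<tau>::real. f' (v + \<tau> *\<^sub>R (u - v)) (u - v)"
  have ch: "continuous_on UNIV ?h"
    by (intro blinfun.continuous_on continuous_on_compose2[OF cf] continuous_intros) auto
  have "(?g has_vector_derivative ?h \<tau>) (at \<tau> within {0..1})" for \<tau>
  proof -
    have "((\<lambda>\<tau>. v + \<tau> *\<^sub>R (u - v)) has_derivative (\<lambda>x. x *\<^sub>R (u - v))) (at \<tau> within {0..1})"
      by (rule derivative_eq_intros refl | simp)+
    from has_derivative_in_compose[OF this has_derivative_at_withinI[OF d]]
    have "(?g has_derivative (\<lambda>x. f' (v + \<tau> *\<^sub>R (u - v)) (x *\<^sub>R (u - v)))) (at \<tau> within {0..1})"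
      by (simp add: o_def)
    thus ?thesis unfolding has_vector_derivative_def by (simp add: blinfun.scaleR_right)
  qed
  hence FT: "(?h has_integral (?g 1 - ?g 0)) {0..1}"
    by (intro fundamental_theorem_of_calculus) auto
  let ?I = "\<psi> u - \<psi> v"
  have gI: "?g 1 - ?g 0 = ?I" by simp
  have ih: "?h integrable_on {0..1}" using FT by blast
  have ih2: "(\<lambda>\<tau>. (?h \<tau>)^2) integrable_on {0..1}"
    by (rule integrable_continuous_interval) (intro continuous_intros continuous_on_subset[OF ch], simp)
  have "0 \<le> integral {0..1} (\<lambda>\<tau>. (?h \<tau> - ?I)^2)"
    by (rule integral_nonneg) (auto intro!: integrable_continuous_interval continuous_intros continuous_on_subset[OF ch])
  also have "integral {0..1} (\<lambda>\<tau>. (?h \<tau> - ?I)^2) = integral {0..1} (\<lambda>\<tau>. (?h \<tau>)^2 + (- 2 * ?I) * ?h \<tau> + ?I^2)"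
    by (rule integral_cong) (simp add: power2_eq_square algebra_simps)
  also have "\<dots> = integral {0..1} (\<lambda>\<tau>. (?h \<tau>)^2) + (- 2 * ?I) * integral {0..1} ?h + ?I^2"
  proof -
    have ic: "(\<lambda>\<tau>::real. ?I^2) integrable_on {0..1}" by (rule integrable_continuous_interval) (rule continuous_on_const)
    have i1: "(\<lambda>\<tau>. (?h \<tau>)^2 + (- 2 * ?I) * ?h \<tau>) integrable_on {0..1}"
      by (intro integrable_add integrable_on_mult_right ih ih2)
    have "integral {0..1} (\<lambda>\<tau>. (?h \<tau>)^2 + (- 2 * ?I) * ?h \<tau> + ?I^2)
        = integral {0..1} (\<lambda>\<tau>. (?h \<tau>)^2 + (- 2 * ?I) * ?h \<tau>) + integral {0..1} (\<lambda>\<tau>::real. ?I^2)"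
      by (rule integral_add[OF i1 ic])
    also have "integral {0..1} (\<lambda>\<tau>. (?h \<tau>)^2 + (- 2 * ?I) * ?h \<tau>) = integral {0..1} (\<lambda>\<tau>. (?h \<tau>)^2) + integral {0..1} (\<lambda>\<tau>. (- 2 * ?I) * ?h \<tau>)"
      by (rule integral_add[OF ih2 integrable_on_mult_right[OF ih]])
    also have "integral {0..1} (\<lambda>\<tau>. (- 2 * ?I) * ?h \<tau>) = (- 2 * ?I) * integral {0..1} ?h"
      by (rule integral_mult_right)
    finally show ?thesis by simp
  qed
  also have "integral {0..1} ?h = ?I" using FT gI by (simp add: integral_unique)
  finally show ?thesis by (simp add: power2_eq_square algebra_simps)
qed

lemma nn_affine:
  fixes F :: "'a::euclidean_space \<Rightarrow> ennreal" and c :: real and t :: 'a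
  assumes Fm[measurable]: "F \<in> borel_measurable borel" and c: "c \<noteq> 0"
  shows "(\<integral>\<^sup>+z. F z \<partial>lborel) = ennreal (\<bar>c\<bar>^DIM('a)) * (\<integral>\<^sup>+x. F (t + c *\<^sub>R x) \<partial>lborel)"
proof -
  have "(\<integral>\<^sup>+z. F z \<partial>lborel) = (\<integral>\<^sup>+z. F z \<partial>density (distr lborel borel (\<lambda>x. t + c *\<^sub>R x)) (\<lambda>_. ennreal (\<bar>c\<bar>^DIM('a))))"
    by (subst lborel_affine[OF c, of t]) (rule refl)
  also have "\<dots> = (\<integral>\<^sup>+z. ennreal (\<bar>c\<bar>^DIM('a)) * F z \<partial>distr lborel borel (\<lambda>x. t + c *\<^sub>R x))"
    by (subst nn_integral_density) auto
  also have "\<dots> = (\<integral>\<^sup>+x. ennreal (\<bar>c\<bar>^DIM('a)) * F (t + c *\<^sub>R x) \<partial>lborel)"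
    by (subst nn_integral_distr) auto
  also have "\<dots> = ennreal (\<bar>c\<bar>^DIM('a)) * (\<integral>\<^sup>+x. F (t + c *\<^sub>R x) \<partial>lborel)"
    by (subst nn_integral_cmult) auto
  finally show ?thesis .
qed

lemma affine_half_bound:
  fixes G :: "'a::euclidean_space \<Rightarrow> real" and Q :: "'a set"
  assumes cQ: "convex Q" and Qm[measurable]: "Q \<in> sets borel"
    and Gm[measurable]: "G \<in> borel_measurable borel"
    and w: "w \<in> Q" and c1: "1/2 \<le> c" and c2: "c \<le> 1"
  shows "(\<integral>\<^sup>+x. ennreal (G ((1 - c) *\<^sub>R w + c *\<^sub>R x)) * indicator Q x \<partial>lborel)
          \<le> 2^DIM('a) * (\<integral>\<^sup>+z. ennreal (G z) * indicator Q z \<partial>lborel)"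
proof -
  let ?F = "\<lambda>z. ennreal (G z) * indicator Q z"
  have "(\<integral>\<^sup>+x. ennreal (G ((1 - c) *\<^sub>R w + c *\<^sub>R x)) * indicator Q x \<partial>lborel) \<le> (\<integral>\<^sup>+x. ?F ((1 - c) *\<^sub>R w + c *\<^sub>R x) \<partial>lborel)"
  proof (rule nn_integral_mono)
    fix x show "ennreal (G ((1 - c) *\<^sub>R w + c *\<^sub>R x)) * indicator Q x \<le> ?F ((1 - c) *\<^sub>R w + c *\<^sub>R x)"
    proof (cases "x \<in> Q")
      case True
      have "(1 - c) *\<^sub>R w + c *\<^sub>R x \<in> Q" by (rule convexD[OF cQ w True]) (use c1 c2 in auto)
      thus ?thesis using True by simp
    qed simp
  qed
  also have "\<dots> \<le> ennreal ((2 * c)^DIM('a)) * (\<integral>\<^sup>+x. ?F ((1 - c) *\<^sub>R w + c *\<^sub>R x) \<partial>lborel)"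
  proof -
    have "1 \<le> (2 * c)^DIM('a)" using c1 by (intro one_le_power) auto
    hence h1: "1 \<le> ennreal ((2 * c)^DIM('a))" by (simp add: ennreal_1[symmetric] del: ennreal_1)
    show ?thesis using mult_right_mono[OF h1, of "(\<integral>\<^sup>+x. ?F ((1 - c) *\<^sub>R w + c *\<^sub>R x) \<partial>lborel)"] by simp
  qed
  also have "\<dots> = 2^DIM('a) * (ennreal (\<bar>c\<bar>^DIM('a)) * (\<integral>\<^sup>+x. ?F ((1 - c) *\<^sub>R w + c *\<^sub>R x) \<partial>lborel))"
  proof -
    have "ennreal ((2 * c)^DIM('a)) = 2^DIM('a) * ennreal (\<bar>c\<bar>^DIM('a))"
    proof -
      have e2: "ennreal (2^DIM('a)) = 2^DIM('a)" by (metis ennreal_numeral ennreal_power zero_le_numeral)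
      show ?thesis using c1 by (simp add: power_mult_distrib ennreal_mult e2)
    qed
    thus ?thesis by (simp add: mult.assoc)
  qed
  also have "ennreal (\<bar>c\<bar>^DIM('a)) * (\<integral>\<^sup>+x. ?F ((1 - c) *\<^sub>R w + c *\<^sub>R x) \<partial>lborel) = (\<integral>\<^sup>+z. ?F z \<partial>lborel)"
    using c1 by (intro nn_affine[symmetric]) auto
  finally show ?thesis .
qed

lemma cube_poincare:
  fixes \<psi> :: "'a::euclidean_space \<Rightarrow> real" and f' :: "'a \<Rightarrow> 'a \<Rightarrow>\<^sub>L real"
    and Q :: "'a set" and G :: "'a \<Rightarrow> real"
  assumes d: "\<And>z. (\<psi> has_derivative blinfun_apply (f' z)) (at z)"
    and cf: "continuous_on UNIV f'"
    and cQ: "convex Q" and Qm[measurable]: "Q \<in> sets borel"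
    and Gm[measurable]: "G \<in> borel_measurable borel" and G0: "\<And>z. 0 \<le> G z"
    and bnd: "\<And>u v z. u \<in> Q \<Longrightarrow> v \<in> Q \<Longrightarrow> z \<in> Q \<Longrightarrow> (f' z (u - v))^2 \<le> G z"
  shows "(\<integral>\<^sup>+u. \<integral>\<^sup>+v. ennreal ((\<psi> u - \<psi> v)^2) * indicator Q v * indicator Q u \<partial>lborel \<partial>lborel)
         \<le> 2^DIM('a) * emeasure lborel Q * (\<integral>\<^sup>+z. ennreal (G z) * indicator Q z \<partial>lborel)"
proof -
  let ?S = "\<integral>\<^sup>+z. ennreal (G z) * indicator Q z \<partial>lborel"
  let ?K = "\<lambda>u v \<tau>. ennreal (G (v + \<tau> *\<^sub>R (u - v))) * indicator {0<..<1::real} \<tau> * indicator Q v * indicator Q u"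
  have step1: "ennreal ((\<psi> u - \<psi> v)^2) * indicator Q v * indicator Q u
      \<le> (\<integral>\<^sup>+\<tau>. ?K u v \<tau> \<partial>lborel)" for u v
  proof (cases "u \<in> Q \<and> v \<in> Q")
    case True
    let ?h = "\<lambda>\<tau>::real. (f' (v + \<tau> *\<^sub>R (u - v)) (u - v))^2"
    have ch: "continuous_on UNIV ?h"
      by (intro continuous_intros blinfun.continuous_on continuous_on_compose2[OF cf]) auto
    have "ennreal ((\<psi> u - \<psi> v)^2) \<le> ennreal (integral {0..1} ?h)"
      by (rule ennreal_leI, rule seg_ineq[OF d cf])
    also have "\<dots> = (\<integral>\<^sup>+\<tau>. ennreal (?h \<tau>) * indicator {0<..<1} \<tau> \<partial>lborel)"
      by (rule nn_integral_cont_interval[symmetric, OF ch]) auto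
    also have "\<dots> \<le> (\<integral>\<^sup>+\<tau>. ennreal (G (v + \<tau> *\<^sub>R (u - v))) * indicator {0<..<1} \<tau> \<partial>lborel)"
    proof (rule nn_integral_mono)
      fix \<tau> :: real
      show "ennreal (?h \<tau>) * indicator {0<..<1} \<tau> \<le> ennreal (G (v + \<tau> *\<^sub>R (u - v))) * indicator {0<..<1} \<tau>"
      proof (cases "\<tau> \<in> {0<..<1}")
        case T: True
        have "(1 - \<tau>) *\<^sub>R v + \<tau> *\<^sub>R u \<in> Q" by (rule convexD[OF cQ]) (use True T in auto)
        moreover have "(1 - \<tau>) *\<^sub>R v + \<tau> *\<^sub>R u = v + \<tau> *\<^sub>R (u - v)" by (simp add: algebra_simps)
        ultimately have "?h \<tau> \<le> G (v + \<tau> *\<^sub>R (u - v))" using bnd True by metis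
        thus ?thesis using T by (simp add: ennreal_leI)
      qed simp
    qed
    finally show ?thesis using True by (simp add: indicator_def)
  qed (auto simp: indicator_def)
  have "(\<integral>\<^sup>+u. \<integral>\<^sup>+v. ennreal ((\<psi> u - \<psi> v)^2) * indicator Q v * indicator Q u \<partial>lborel \<partial>lborel)
      \<le> (\<integral>\<^sup>+u. \<integral>\<^sup>+v. \<integral>\<^sup>+\<tau>. ?K u v \<tau> \<partial>lborel \<partial>lborel \<partial>lborel)"
    by (intro nn_integral_mono step1)
  also have "\<dots> = (\<integral>\<^sup>+u. \<integral>\<^sup>+\<tau>. \<integral>\<^sup>+v. ?K u v \<tau> \<partial>lborel \<partial>lborel \<partial>lborel)"
    by (intro nn_integral_cong lborel_pair.Fubini'[symmetric]) measurable
  also have "\<dots> = (\<integral>\<^sup>+\<tau>. \<integral>\<^sup>+u. \<integral>\<^sup>+v. ?K u v \<tau> \<partial>lborel \<partial>lborel \<partial>lborel)"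
    by (intro lborel_pair.Fubini'[symmetric]) measurable
  also have "\<dots> \<le> (\<integral>\<^sup>+\<tau>. indicator {0<..<1::real} \<tau> * (2^DIM('a) * emeasure lborel Q * ?S) \<partial>lborel)"
  proof (rule nn_integral_mono)
    fix \<tau> :: real
    show "(\<integral>\<^sup>+u. \<integral>\<^sup>+v. ?K u v \<tau> \<partial>lborel \<partial>lborel) \<le> indicator {0<..<1::real} \<tau> * (2^DIM('a) * emeasure lborel Q * ?S)"
    proof (cases "\<tau> \<in> {0<..<1}")
      case False
      hence "\<And>u v. ?K u v \<tau> = 0" by simp
      thus ?thesis using False by simp
    next
      case T: True
      have key: "(\<integral>\<^sup>+u. (\<integral>\<^sup>+v. ennreal (G ((1 - c) *\<^sub>R u + c *\<^sub>R v)) * indicator Q v \<partial>lborel) * indicator Q u \<partial>lborel)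
          \<le> 2^DIM('a) * emeasure lborel Q * ?S" if c1: "1/2 \<le> c" and c2: "c \<le> 1" for c
      proof -
        have "(\<integral>\<^sup>+u. (\<integral>\<^sup>+v. ennreal (G ((1 - c) *\<^sub>R u + c *\<^sub>R v)) * indicator Q v \<partial>lborel) * indicator Q u \<partial>lborel)
            \<le> (\<integral>\<^sup>+u. (2^DIM('a) * ?S) * indicator Q u \<partial>lborel)"
        proof (rule nn_integral_mono)
          fix u show "(\<integral>\<^sup>+v. ennreal (G ((1 - c) *\<^sub>R u + c *\<^sub>R v)) * indicator Q v \<partial>lborel) * indicator Q u \<le> (2^DIM('a) * ?S) * indicator Q u"
          proof (cases "u \<in> Q")
            case True
            show ?thesis using True affine_half_bound[OF cQ Qm Gm True c1 c2] by simp
          qed simp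
        qed
        also have "\<dots> = 2^DIM('a) * emeasure lborel Q * ?S"
          by (subst nn_integral_cmult_indicator) (auto simp: mult_ac)
        finally show ?thesis .
      qed
      have "(\<integral>\<^sup>+u. \<integral>\<^sup>+v. ?K u v \<tau> \<partial>lborel \<partial>lborel) \<le> 2^DIM('a) * emeasure lborel Q * ?S"
      proof (cases "\<tau> \<le> 1/2")
        case True
        have "(\<integral>\<^sup>+u. \<integral>\<^sup>+v. ?K u v \<tau> \<partial>lborel \<partial>lborel)
            = (\<integral>\<^sup>+u. (\<integral>\<^sup>+v. ennreal (G ((1 - (1 - \<tau>)) *\<^sub>R u + (1 - \<tau>) *\<^sub>R v)) * indicator Q v \<partial>lborel) * indicator Q u \<partial>lborel)"
        proof (intro nn_integral_cong)
          fix u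
          have "(\<integral>\<^sup>+v. ?K u v \<tau> \<partial>lborel) = (\<integral>\<^sup>+v. ennreal (G ((1 - (1 - \<tau>)) *\<^sub>R u + (1 - \<tau>) *\<^sub>R v)) * indicator Q v * indicator Q u \<partial>lborel)"
            using T by (intro nn_integral_cong) (simp add: algebra_simps)
          also have "\<dots> = (\<integral>\<^sup>+v. ennreal (G ((1 - (1 - \<tau>)) *\<^sub>R u + (1 - \<tau>) *\<^sub>R v)) * indicator Q v \<partial>lborel) * indicator Q u"
            by (rule nn_integral_multc) measurable
          finally show "(\<integral>\<^sup>+v. ?K u v \<tau> \<partial>lborel) = (\<integral>\<^sup>+v. ennreal (G ((1 - (1 - \<tau>)) *\<^sub>R u + (1 - \<tau>) *\<^sub>R v)) * indicator Q v \<partial>lborel) * indicator Q u" .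
        qed
        also have "\<dots> \<le> 2^DIM('a) * emeasure lborel Q * ?S"
          using True T by (intro key) auto
        finally show ?thesis .
      next
        case False
        have "(\<integral>\<^sup>+u. \<integral>\<^sup>+v. ?K u v \<tau> \<partial>lborel \<partial>lborel) = (\<integral>\<^sup>+v. \<integral>\<^sup>+u. ?K u v \<tau> \<partial>lborel \<partial>lborel)"
          by (rule lborel_pair.Fubini') measurable
        also have "\<dots> = (\<integral>\<^sup>+v. (\<integral>\<^sup>+u. ennreal (G ((1 - \<tau>) *\<^sub>R v + \<tau> *\<^sub>R u)) * indicator Q u \<partial>lborel) * indicator Q v \<partial>lborel)"
        proof (intro nn_integral_cong)
          fix v
          have "(\<integral>\<^sup>+u. ?K u v \<tau> \<partial>lborel) = (\<integral>\<^sup>+u. ennreal (G ((1 - \<tau>) *\<^sub>R v + \<tau> *\<^sub>R u)) * indicator Q u * indicator Q v \<partial>lborel)"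
            using T by (intro nn_integral_cong) (simp add: algebra_simps)
          also have "\<dots> = (\<integral>\<^sup>+u. ennreal (G ((1 - \<tau>) *\<^sub>R v + \<tau> *\<^sub>R u)) * indicator Q u \<partial>lborel) * indicator Q v"
            by (rule nn_integral_multc) measurable
          finally show "(\<integral>\<^sup>+u. ?K u v \<tau> \<partial>lborel) = (\<integral>\<^sup>+u. ennreal (G ((1 - \<tau>) *\<^sub>R v + \<tau> *\<^sub>R u)) * indicator Q u \<partial>lborel) * indicator Q v" .
        qed
        also have "\<dots> \<le> 2^DIM('a) * emeasure lborel Q * ?S"
          using False T by (intro key) auto
        finally show ?thesis .
      qed
      thus ?thesis using T by simp
    qed
  qed
  also have "\<dots> = 2^DIM('a) * emeasure lborel Q * ?S"
    by (subst nn_integral_multc) auto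
  finally show ?thesis .
qed

lemma set_integrable_bdd:
  fixes f :: "'a::euclidean_space \<Rightarrow> real"
  assumes [measurable]: "S \<in> sets borel" and bS: "bounded S" and [measurable]: "f \<in> borel_measurable borel"
    and K: "\<And>x. x \<in> S \<Longrightarrow> \<bar>f x\<bar> \<le> K"
  shows "set_integrable lborel S f"
  unfolding set_integrable_def
  by (rule integrableI_bounded_set_indicator[where B=K]) (use K emeasure_bounded_finite[OF bS] in auto)

lemma set_integrable_cont:
  fixes f :: "'a::euclidean_space \<Rightarrow> real"
  assumes "S \<in> sets borel" and bS: "bounded S" and cf: "continuous_on UNIV f"
  shows "set_integrable lborel S f"
proof -
  have "compact (f ` closure S)"
    by (rule compact_continuous_image[OF continuous_on_subset[OF cf]]) (use bS compact_closure in auto)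
  then obtain K where K: "\<And>y. y \<in> f ` closure S \<Longrightarrow> norm y \<le> K"
    using compact_imp_bounded bounded_iff by metis
  show ?thesis
    by (rule set_integrable_bdd[OF assms(1) bS, where K=K])
       (use K closure_subset cf in \<open>auto intro: borel_measurable_continuous_onI\<close>)
qed

lemma variance_le:
  fixes f :: "'a \<Rightarrow> real"
  assumes Sm: "S \<in> sets M" and Sf: "emeasure M S < \<infinity>" and Sp: "measure M S > 0"
    and i1: "set_integrable M S f" and i2: "set_integrable M S (\<lambda>x. (f x)^2)"
  shows "(LINT x:S|M. (f x - (LINT y:S|M. f y) / measure M S)^2) \<le> (LINT x:S|M. (f x - c)^2)"
proof -
  let ?m = "measure M S" and ?I1 = "LINT y:S|M. f y" and ?I2 = "LINT y:S|M. (f y)^2"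
  have ic: "set_integrable M S (\<lambda>x. k)" for k :: real
    unfolding set_integrable_def
    by (rule integrableI_bounded_set_indicator[where B="\<bar>k\<bar>"]) (use Sm Sf in auto)
  have E: "(LINT x:S|M. (f x - c)^2) = ?I2 - 2 * c * ?I1 + c^2 * ?m" for c
  proof -
    have "(LINT x:S|M. (f x - c)^2) = (LINT x:S|M. ((f x)^2 - (2 * c) * f x) + c^2)"
      by (rule set_lebesgue_integral_cong) (use Sm in \<open>auto simp: power2_eq_square algebra_simps\<close>)
    also have "\<dots> = (LINT x:S|M. (f x)^2 - (2 * c) * f x) + (LINT x:S|M. c^2)"
      by (rule set_integral_add(2)) (use i1 i2 ic in auto)
    also have "(LINT x:S|M. (f x)^2 - (2 * c) * f x) = ?I2 - (2 * c) * ?I1"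
      using i1 i2 by (simp add: set_integral_diff(2))
    also have "(LINT x:S|M. c^2) = c^2 * ?m"
      using set_integral_const[OF Sm, of "c^2"] Sf by (simp add: top.not_eq_extremum)
    finally show ?thesis by simp
  qed
  have "(LINT x:S|M. (f x - c)^2) - (LINT x:S|M. (f x - ?I1 / ?m)^2) = (?I1 - c * ?m)^2 / ?m"
    unfolding E using Sp by (simp add: field_simps power2_eq_square)
  moreover have "(?I1 - c * ?m)^2 / ?m \<ge> 0" using Sp by simp
  ultimately show ?thesis by linarith
qed

lemma partial1_deriv:
  fixes \<phi> :: "real \<times> 'b::euclidean_space \<Rightarrow> real" and f' :: "real \<times> 'b \<Rightarrow> (real \<times> 'b) \<Rightarrow>\<^sub>L real"
  assumes d: "\<And>x. (\<phi> has_derivative blinfun_apply (f' x)) (at x)"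
  shows "((\<lambda>s. \<phi> (s, y)) has_real_derivative f' (s, y) (1, 0)) (at s)"
proof -
  have "((\<lambda>s. (s, y)) has_derivative (\<lambda>h. (h, 0))) (at s)"
    by (rule derivative_eq_intros refl)+
  from has_derivative_compose[OF this d]
  have "((\<lambda>s. \<phi> (s, y)) has_derivative (\<lambda>h. f' (s, y) (h, 0))) (at s)" by (simp add: o_def)
  moreover have "(\<lambda>h. f' (s, y) (h, 0)) = (\<lambda>h. h * f' (s, y) (1, 0))"
  proof
    fix h :: real have "(h, 0::'b) = h *\<^sub>R (1, 0)" by simp
    thus "f' (s, y) (h, 0) = h * f' (s, y) (1, 0)" by (metis blinfun.scaleR_right real_scaleR_def)
  qed
  moreover have "(*) (f' (s, y) (1, 0)) = (\<lambda>h. h * f' (s, y) (1, 0))" by (auto simp: mult.commute)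
  ultimately show ?thesis unfolding has_field_derivative_def by simp
qed

definition emb2 :: "'b::euclidean_space \<Rightarrow>\<^sub>L (real \<times> 'b)" where
  "emb2 = Blinfun (\<lambda>h. (0, h))"

lemma emb2_apply[simp]:
  fixes h :: "'b::euclidean_space"
  shows "blinfun_apply emb2 h = (0, h)"
proof -
  have "bounded_linear (\<lambda>h::'b. (0::real, h))"
    by (intro bounded_linear_Pair bounded_linear_zero bounded_linear_ident)
  thus ?thesis unfolding emb2_def by (simp add: bounded_linear_Blinfun_apply)
qed

lemma partial2_deriv:
  fixes \<phi> :: "real \<times> 'b::euclidean_space \<Rightarrow> real" and f' :: "real \<times> 'b \<Rightarrow> (real \<times> 'b) \<Rightarrow>\<^sub>L real"
  assumes d: "\<And>x. (\<phi> has_derivative blinfun_apply (f' x)) (at x)"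
  shows "((\<lambda>z. \<phi> (w, z)) has_derivative blinfun_apply (f' (w, z) o\<^sub>L emb2)) (at z)"
proof -
  have "((\<lambda>z. (w, z)) has_derivative (\<lambda>h. (0, h))) (at z)"
    by (rule derivative_eq_intros refl)+
  from has_derivative_compose[OF this d]
  have "((\<lambda>z. \<phi> (w, z)) has_derivative (\<lambda>x. f' (w, z) (0, x))) (at z)" by (simp add: o_def)
  moreover have "blinfun_apply (f' (w, z) o\<^sub>L emb2) = (\<lambda>x. f' (w, z) (0, x))" by (rule ext) simp
  ultimately show ?thesis by simp
qed

lemma partial2_cont:
  fixes f' :: "real \<times> 'b::euclidean_space \<Rightarrow> (real \<times> 'b) \<Rightarrow>\<^sub>L real"
  assumes cf: "continuous_on UNIV f'"
  shows "continuous_on UNIV (\<lambda>z. f' (w, z) o\<^sub>L emb2)"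
  by (intro continuous_intros continuous_on_compose2[OF cf]) auto

lemma grad_bound:
  fixes L :: "(real \<times> 'b::euclidean_space) \<Rightarrow>\<^sub>L real"
  shows "(L (0, h))^2 \<le> (norm h)^2 * (\<Sum>i\<in>Basis. (L (0, i))^2)"
proof -
  have "(0::real, h) = (\<Sum>i\<in>Basis. (h \<bullet> i) *\<^sub>R (0::real, i))"
  proof -
    have "(\<Sum>i\<in>Basis. (h \<bullet> i) *\<^sub>R (0::real, i)) = (0, \<Sum>i\<in>Basis. (h \<bullet> i) *\<^sub>R i)"
      by (rule prod_eqI) (simp_all add: fst_sum snd_sum)
    thus ?thesis by (simp add: euclidean_representation)
  qed
  hence "L (0, h) = (\<Sum>i\<in>Basis. L ((h \<bullet> i) *\<^sub>R (0::real, i)))"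
    by (metis blinfun.sum_right)
  also have "\<dots> = (\<Sum>i\<in>Basis. (h \<bullet> i) * L (0, i))"
    by (simp only: blinfun.scaleR_right real_scaleR_def)
  finally have "L (0, h) = (\<Sum>i\<in>Basis. (h \<bullet> i) * L (0, i))" .
  hence "(L (0, h))^2 \<le> (\<Sum>i\<in>Basis. (h \<bullet> i)^2) * (\<Sum>i\<in>Basis. (L (0, i))^2)"
    by (simp add: Cauchy_Schwarz_ineq_sum)
  moreover have "(\<Sum>i\<in>Basis. (h \<bullet> i)^2) = (norm h)^2"
  proof -
    have "(norm h)^2 = h \<bullet> h" by (rule power2_norm_eq_inner)
    also have "\<dots> = (\<Sum>i\<in>Basis. (h \<bullet> i) * (h \<bullet> i))" by (rule euclidean_inner)
    finally show ?thesis by (simp add: power2_eq_square)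
  qed
  ultimately show ?thesis by simp
qed

lemma norm_diff_cube:
  fixes u v :: "real^'m"
  assumes "\<And>i. \<bar>u $ i\<bar> < B" "\<And>i. \<bar>v $ i\<bar> < B"
  shows "(norm (u - v))^2 \<le> 4 * real CARD('m) * B^2"
proof -
  have "(norm (u - v))^2 = (u - v) \<bullet> (u - v)" by (simp add: power2_norm_eq_inner)
  also have "\<dots> = (\<Sum>i\<in>UNIV. ((u - v) $ i)^2)"
    unfolding inner_vec_def by (simp add: power2_eq_square)
  also have "\<dots> \<le> (\<Sum>i\<in>(UNIV::'m set). 4 * B^2)"
  proof (rule sum_mono)
    fix i
    have "\<bar>(u - v) $ i\<bar> \<le> 2 * B" using assms[of i] by auto
    hence "((u - v) $ i)^2 \<le> (2 * B)^2" by (metis abs_ge_zero power2_abs power_mono)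
    thus "((u - v) $ i)^2 \<le> 4 * B^2" by (simp add: power2_eq_square)
  qed
  also have "\<dots> = 4 * real CARD('m) * B^2" by simp
  finally show ?thesis .
qed

definition cube :: "real \<Rightarrow> (real^'m::finite) set" where
  "cube B = box (- (\<chi> i. B)) (\<chi> i. B)"

lemma mem_cube: "y \<in> cube B \<longleftrightarrow> (\<forall>i. \<bar>y $ i\<bar> < B)"
  unfolding cube_def mem_box_cart by (simp add: abs_less_iff) (meson minus_less_iff)

lemma cube_props: "cube B \<in> sets borel" "bounded (cube B)" "convex (cube B)"
  unfolding cube_def by (auto simp: bounded_box convex_box)

lemma cube_measure:
  assumes "B > 0"
  shows "emeasure lborel (cube B :: (real^'m::finite) set) = ennreal ((2 * B) ^ CARD('m))"
proof -
  have "emeasure lborel (cube B :: (real^'m) set) = ennreal (\<Prod>b\<in>Basis. ((\<chi> i. B) - (- (\<chi> i. B))) \<bullet> (b::real^'m))"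
    unfolding cube_def emeasure_lborel_box_eq using assms
    by (auto simp: inner_axis Basis_vec_def)
  also have "(\<Prod>b\<in>Basis. ((\<chi> i. B) - (- (\<chi> i. B))) \<bullet> (b::real^'m)) = (\<Prod>b\<in>(Basis::(real^'m) set). 2 * B)"
    by (rule prod.cong) (auto simp: inner_axis Basis_vec_def)
  also have "\<dots> = (2 * B) ^ CARD('m)"
    by simp
  finally show ?thesis .
qed

lemma nn_set_integral_eq:
  fixes f :: "'a \<Rightarrow> real"
  assumes i: "set_integrable M S f" and nn: "\<And>x. x \<in> S \<Longrightarrow> 0 \<le> f x"
  shows "(\<integral>\<^sup>+x. ennreal (f x) * indicator S x \<partial>M) = ennreal (LINT x:S|M. f x)"
proof -
  have "(\<integral>\<^sup>+x. ennreal (f x) * indicator S x \<partial>M) = (\<integral>\<^sup>+x. ennreal (indicator S x *\<^sub>R f x) \<partial>M)"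
    by (rule nn_integral_cong) (auto split: split_indicator)
  also have "\<dots> = ennreal (integral\<^sup>L M (\<lambda>x. indicator S x *\<^sub>R f x))"
    by (rule nn_integral_eq_integral) (use i nn in \<open>auto simp: set_integrable_def split: split_indicator\<close>)
  finally show ?thesis by (simp add: set_lebesgue_integral_def)
qed

definition slab :: "real \<Rightarrow> real \<Rightarrow> real \<Rightarrow> (real \<times> (real^'m::finite)) set" where
  "slab a b B = {a<..<b} \<times> cube B"

lemma slab_props: "slab a b B \<in> sets borel" "bounded (slab a b B)"
  unfolding slab_def
   apply (rule borel_open, rule open_Times, simp, simp add: cube_def)
  by (auto intro!: bounded_Times simp: cube_props)

definition gradf :: "(real \<times> (real^'m::finite) \<Rightarrow> (real \<times> (real^'m)) \<Rightarrow>\<^sub>L real) \<Rightarrow> real \<times> (real^'m) \<Rightarrow> real" where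
  "gradf f' x = (\<Sum>i\<in>Basis. (f' x (0, i))^2)"

lemma nn_add_cmult2:
  fixes f g :: "'a \<Rightarrow> ennreal"
  assumes "f \<in> borel_measurable M" "g \<in> borel_measurable M"
  shows "(\<integral>\<^sup>+x. 2 * f x + 2 * g x \<partial>M) = 2 * integral\<^sup>N M f + 2 * integral\<^sup>N M g"
  using assms by (simp add: nn_integral_add nn_integral_cmult)

lemma meas_pp:
  fixes F :: "'a::euclidean_space \<times> 'b::euclidean_space \<Rightarrow> ennreal"
  assumes "F \<in> borel_measurable borel"
  shows "F \<in> borel_measurable (lborel \<Otimes>\<^sub>M lborel)"
proof -
  have "sets (lborel \<Otimes>\<^sub>M lborel) = sets (borel :: ('a \<times> 'b) measure)"
    by (metis lborel_prod sets_lborel)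
  thus ?thesis using assms measurable_cong_sets by blast
qed

lemma meas_inner1:
  fixes F :: "'a::euclidean_space \<times> 'b::euclidean_space \<Rightarrow> ennreal"
  assumes "F \<in> borel_measurable borel"
  shows "(\<lambda>x2. \<integral>\<^sup>+x1. F (x1, x2) \<partial>lborel) \<in> borel_measurable lborel"
  using lborel.borel_measurable_nn_integral_fst[OF measurable_pair_swap[OF meas_pp[OF assms]]] by simp

lemma meas_inner2:
  fixes F :: "'a::euclidean_space \<times> 'b::euclidean_space \<Rightarrow> ennreal"
  assumes "F \<in> borel_measurable borel"
  shows "(\<lambda>x1. \<integral>\<^sup>+x2. F (x1, x2) \<partial>lborel) \<in> borel_measurable lborel"
  using lborel.borel_measurable_nn_integral_fst[OF meas_pp[OF assms]] by simp

lemma core: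
  fixes \<phi> :: "real \<times> (real^'m::finite) \<Rightarrow> real" and f' :: "real \<times> (real^'m) \<Rightarrow> (real \<times> (real^'m)) \<Rightarrow>\<^sub>L real"
  assumes d: "\<And>x. (\<phi> has_derivative blinfun_apply (f' x)) (at x)"
    and cf: "continuous_on UNIV f'"
    and aa: "a \<le> a'" and ab': "a' < b'" and bb: "b' \<le> b" and len: "b - a = 2 * (b' - a')" and B0: "0 < B"
    and hw1: "\<And>s x. s \<in> {a'<..<b'} \<Longrightarrow> x \<in> {a..s} \<Longrightarrow> (x - a)^2 \<le> x^2"
    and hw2: "\<And>s x. s \<in> {a'<..<b'} \<Longrightarrow> x \<in> {s..b} \<Longrightarrow> (x - b)^2 \<le> x^2"
  shows "ennreal (LINT x:slab a b B|lborel. (\<phi> x - (LINT y:slab a b B|lborel. \<phi> y) / measure lborel (slab a b B :: (real \<times> (real^'m)) set))^2)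
    \<le> 8 * (\<integral>\<^sup>+x. ennreal ((fst x)^2 * (f' x (1, 0))^2) * indicator (slab a b B) x \<partial>lborel)
      + ennreal (2^(CARD('m)+4) * real CARD('m) * B^2) * (\<integral>\<^sup>+x. ennreal (gradf f' x) * indicator (slab a' b' B) x \<partial>lborel)"
proof -
  define R where "R = (slab a b B :: (real \<times> (real^'m)) set)"
  define R' where "R' = (slab a' b' B :: (real \<times> (real^'m)) set)"
  define Q where "Q = (cube B :: (real^'m) set)"
  define m where "m = CARD('m)"
  define V where "V = (LINT x:R|lborel. (\<phi> x - (LINT y:R|lborel. \<phi> y) / measure lborel R)^2)"
  define J1 where "J1 = (\<integral>\<^sup>+x. ennreal ((fst x)^2 * (f' x (1, 0))^2) * indicator R x \<partial>lborel)"
  define J2 where "J2 = (\<integral>\<^sup>+x. ennreal (gradf f' x) * indicator R' x \<partial>lborel)"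
  have cphi: "continuous_on UNIV \<phi>"
    using d by (meson has_derivative_continuous continuous_at_imp_continuous_on)
  have [measurable]: "\<phi> \<in> borel_measurable borel"
    using cphi by (rule borel_measurable_continuous_onI)
  have cfv: "continuous_on UNIV (\<lambda>x. f' x v)" for v
    by (intro continuous_intros blinfun.continuous_on cf) 
  have [measurable]: "(\<lambda>x. f' x v) \<in> borel_measurable borel" for v
    using cfv by (rule borel_measurable_continuous_onI)
  have [measurable]: "gradf f' \<in> borel_measurable borel"
    unfolding gradf_def by measurable
  have [measurable]: "\<phi> \<in> borel_measurable (borel \<Otimes>\<^sub>M borel)"
    by (simp add: borel_prod)
  have [measurable]: "(\<lambda>x. f' x v) \<in> borel_measurable (borel \<Otimes>\<^sub>M borel)" for v
    by (simp add: borel_prod)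
  have [measurable]: "gradf f' \<in> borel_measurable (borel \<Otimes>\<^sub>M borel)"
    by (simp add: borel_prod)
  have [measurable]: "fst \<in> (borel :: (real \<times> (real^'m)) measure) \<rightarrow>\<^sub>M borel"
    by (intro borel_measurable_continuous_onI continuous_intros)
  have [measurable]: "snd \<in> (borel :: (real \<times> (real^'m)) measure) \<rightarrow>\<^sub>M borel"
    by (intro borel_measurable_continuous_onI continuous_intros)
  have [measurable]: "fst \<in> (lborel :: (real \<times> (real^'m)) measure) \<rightarrow>\<^sub>M borel"
    by (simp add: measurable_lborel1)
  have [measurable]: "snd \<in> (lborel :: (real \<times> (real^'m)) measure) \<rightarrow>\<^sub>M borel"
    by (simp add: measurable_lborel1)
  have opens: "open R" "open R'" "open Q"
    unfolding R_def R'_def Q_def slab_def cube_def by (auto intro!: open_Times)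
  have Rm[measurable]: "R \<in> sets borel" "R' \<in> sets borel" "Q \<in> sets borel"
    unfolding R_def R'_def Q_def using slab_props cube_props by auto
  have QB: "emeasure lborel Q = ennreal ((2 * B) ^ m)" "(2 * B) ^ m > 0"
    unfolding Q_def m_def using cube_measure B0 by auto
  have ER: "emeasure lborel (slab c e B :: (real \<times> (real^'m)) set) = ennreal (e - c) * emeasure lborel Q" if "c \<le> e" for c e
    unfolding slab_def Q_def
    by (subst lborel_prod[symmetric], subst lborel.emeasure_pair_measure_Times) (auto simp: cube_props that)
  have ba: "a < b" using len ab' by (smt (verit))
  have mR: "emeasure lborel R = ennreal ((b - a) * (2 * B) ^ m)"
    unfolding R_def using ER[of a b] ba QB by (simp add: ennreal_mult)
  have mR': "emeasure lborel R' = ennreal ((b' - a') * (2 * B) ^ m)"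
    unfolding R'_def using ER[of a' b'] ab' QB by (simp add: ennreal_mult)
  have Rfin: "emeasure lborel R < \<infinity>" using mR by simp
  have Rpos: "measure lborel R > 0" using mR ba QB by (simp add: measure_def)
  have Rl: "R \<in> sets lborel" using Rm by simp
  have bR: "bounded R" unfolding R_def by (rule slab_props)
  have iphi: "set_integrable lborel R \<phi>"
    by (rule set_integrable_cont[OF Rm(1) bR cphi])
  have iphi2: "set_integrable lborel R (\<lambda>x. (\<phi> x)^2)"
    by (rule set_integrable_cont[OF Rm(1) bR]) (intro continuous_intros cphi)
  have iphic: "set_integrable lborel R (\<lambda>x. (\<phi> x - c)^2)" for c
    by (rule set_integrable_cont[OF Rm(1) bR]) (intro continuous_intros cphi)
  have stepA: "ennreal V \<le> (\<integral>\<^sup>+x. ennreal ((\<phi> x - c)^2) * indicator R x \<partial>lborel)" for c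
  proof -
    have "V \<le> (LINT x:R|lborel. (\<phi> x - c)^2)"
      unfolding V_def by (rule variance_le[OF Rl Rfin Rpos iphi iphi2])
    hence "ennreal V \<le> ennreal (LINT x:R|lborel. (\<phi> x - c)^2)" by (rule ennreal_leI)
    also have "\<dots> = (\<integral>\<^sup>+x. ennreal ((\<phi> x - c)^2) * indicator R x \<partial>lborel)"
      by (rule nn_set_integral_eq[symmetric, OF iphic]) simp
    finally show ?thesis .
  qed
  define X1 where "X1 = (\<lambda>w::real \<times> (real^'m). \<integral>\<^sup>+x. ennreal ((\<phi> (fst x, snd x) - \<phi> (fst w, snd x))^2) * indicator R x \<partial>lborel)"
  define X2 where "X2 = (\<lambda>w::real \<times> (real^'m). \<integral>\<^sup>+x. ennreal ((\<phi> (fst w, snd x) - \<phi> w)^2) * indicator R x \<partial>lborel)"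
  have stepC: "(\<integral>\<^sup>+x. ennreal ((\<phi> x - \<phi> w)^2) * indicator R x \<partial>lborel) \<le> 2 * X1 w + 2 * X2 w" for w
  proof -
    have "(\<integral>\<^sup>+x. ennreal ((\<phi> x - \<phi> w)^2) * indicator R x \<partial>lborel)
       \<le> (\<integral>\<^sup>+x. 2 * (ennreal ((\<phi> (fst x, snd x) - \<phi> (fst w, snd x))^2) * indicator R x)
              + 2 * (ennreal ((\<phi> (fst w, snd x) - \<phi> w)^2) * indicator R x) \<partial>lborel)"
    proof (rule nn_integral_mono)
      fix x :: "real \<times> (real^'m)"
      let ?p = "\<phi> (fst x, snd x) - \<phi> (fst w, snd x)" and ?q = "\<phi> (fst w, snd x) - \<phi> w"
      have "(\<phi> x - \<phi> w)^2 \<le> 2 * ?p^2 + 2 * ?q^2"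
      proof -
        have "\<phi> x - \<phi> w = ?p + ?q" by simp
        moreover have "(?p + ?q)^2 \<le> 2 * ?p^2 + 2 * ?q^2"
          using sum_squares_bound[of ?p ?q] by (simp add: power2_eq_square algebra_simps)
        ultimately show ?thesis by simp
      qed
      hence "ennreal ((\<phi> x - \<phi> w)^2) \<le> 2 * ennreal (?p^2) + 2 * ennreal (?q^2)"
      proof -
        have e: "ennreal (2 * ?p^2 + 2 * ?q^2) = 2 * ennreal (?p^2) + 2 * ennreal (?q^2)"
          by (simp add: ennreal_plus ennreal_mult)
        show ?thesis using ennreal_leI[OF \<open>(\<phi> x - \<phi> w)^2 \<le> 2 * ?p^2 + 2 * ?q^2\<close>] unfolding e .
      qed
      thus "ennreal ((\<phi> x - \<phi> w)^2) * indicator R x \<le> 2 * (ennreal (?p^2) * indicator R x) + 2 * (ennreal (?q^2) * indicator R x)"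
        by (auto split: split_indicator)
    qed
    also have "\<dots> = 2 * X1 w + 2 * X2 w"
      unfolding X1_def X2_def by (rule nn_add_cmult2) measurable
    finally show ?thesis .
  qed
  have stepB: "ennreal V * emeasure lborel R' \<le> 2 * (\<integral>\<^sup>+w. X1 w * indicator R' w \<partial>lborel) + 2 * (\<integral>\<^sup>+w. X2 w * indicator R' w \<partial>lborel)"
  proof -
    have "ennreal V * emeasure lborel R' = (\<integral>\<^sup>+w. ennreal V * indicator R' w \<partial>lborel)"
      by (simp add: nn_integral_cmult_indicator)
    also have "\<dots> \<le> (\<integral>\<^sup>+w. (2 * X1 w + 2 * X2 w) * indicator R' w \<partial>lborel)"
      by (rule nn_integral_mono) (auto split: split_indicator intro: order_trans[OF stepA stepC])
    also have "\<dots> = 2 * (\<integral>\<^sup>+w. X1 w * indicator R' w \<partial>lborel) + 2 * (\<integral>\<^sup>+w. X2 w * indicator R' w \<partial>lborel)"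
      unfolding X1_def X2_def by (simp only: distrib_right mult.assoc, rule nn_add_cmult2) measurable
    finally show ?thesis .
  qed
  have sets_pp: "sets (lborel \<Otimes>\<^sub>M lborel) = sets (borel :: (real \<times> (real^'m)) measure)"
    by (metis lborel_prod sets_lborel)
  have pair_snd: "(\<integral>\<^sup>+x. F x \<partial>lborel) = (\<integral>\<^sup>+x2. \<integral>\<^sup>+x1. F (x1, x2) \<partial>lborel \<partial>lborel)"
    if "F \<in> borel_measurable borel" for F :: "real \<times> (real^'m) \<Rightarrow> ennreal"
    by (subst lborel_prod[symmetric]) (rule lborel_pair.nn_integral_snd[symmetric], use that sets_pp measurable_cong_sets in blast)
  have pair_fst: "(\<integral>\<^sup>+x. F x \<partial>lborel) = (\<integral>\<^sup>+x1. \<integral>\<^sup>+x2. F (x1, x2) \<partial>lborel \<partial>lborel)"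
    if "F \<in> borel_measurable borel" for F :: "real \<times> (real^'m) \<Rightarrow> ennreal"
    by (subst lborel_prod[symmetric]) (rule lborel.nn_integral_fst[symmetric], use that sets_pp measurable_cong_sets in blast)
  have indR: "indicator (slab c e B) (x1, x2) = (indicator {c<..<e} x1 * indicator Q x2 :: ennreal)" for c e x1 x2
    unfolding slab_def Q_def by (simp add: indicator_times)
  have stepD1: "(\<integral>\<^sup>+x1. ennreal ((\<phi> (x1, x2) - \<phi> (s, x2))^2) * indicator R (x1, x2) \<partial>lborel)
      \<le> 4 * (\<integral>\<^sup>+x1. ennreal (x1^2 * (f' (x1, x2) (1, 0))^2) * indicator R (x1, x2) \<partial>lborel)"
    if s: "s \<in> {a'<..<b'}" for s x2
  proof (cases "x2 \<in> Q")
    case False thus ?thesis unfolding R_def indR by simp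
  next
    case True
    let ?g = "\<lambda>x1. \<phi> (x1, x2)" and ?g' = "\<lambda>x1. f' (x1, x2) (1, 0)"
    have dg: "(?g has_real_derivative ?g' x) (at x)" for x by (rule partial1_deriv[OF d])
    have cg: "continuous_on UNIV ?g'"
      by (rule continuous_on_compose2[OF cfv]) (auto intro: continuous_intros)
    have cgg: "continuous_on UNIV ?g" using dg by (meson DERIV_isCont continuous_at_imp_continuous_on)
    have "(\<integral>\<^sup>+x1. ennreal ((?g x1 - ?g s)^2) * indicator R (x1, x2) \<partial>lborel)
        = (\<integral>\<^sup>+x1. ennreal ((?g x1 - ?g s)^2) * indicator {a<..<b} x1 \<partial>lborel)"
      unfolding R_def indR using True by simp
    also have "\<dots> = ennreal (integral {a..b} (\<lambda>x1. (?g x1 - ?g s)^2))"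
      by (rule nn_integral_cont_interval) (use ba in \<open>auto intro!: continuous_intros cgg\<close>)
    also have "\<dots> \<le> ennreal (4 * integral {a..b} (\<lambda>x1. x1^2 * (?g' x1)^2))"
      by (rule ennreal_leI, rule hardy_1d[OF _ _ dg cg]) (use s aa bb hw1 hw2 in auto)
    also have "\<dots> = 4 * ennreal (integral {a..b} (\<lambda>x1. x1^2 * (?g' x1)^2))"
      by (simp add: ennreal_mult')
    also have "ennreal (integral {a..b} (\<lambda>x1. x1^2 * (?g' x1)^2)) = (\<integral>\<^sup>+x1. ennreal (x1^2 * (?g' x1)^2) * indicator {a<..<b} x1 \<partial>lborel)"
      by (rule nn_integral_cont_interval[symmetric]) (use ba in \<open>auto intro!: continuous_intros cg\<close>)
    also have "\<dots> = (\<integral>\<^sup>+x1. ennreal (x1^2 * (?g' x1)^2) * indicator R (x1, x2) \<partial>lborel)"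
      unfolding R_def indR using True by simp
    finally show ?thesis .
  qed
  have stepD: "X1 w \<le> 4 * J1" if w: "w \<in> R'" for w
  proof -
    have s: "fst w \<in> {a'<..<b'}" using w unfolding R'_def slab_def by auto
    have "X1 w = (\<integral>\<^sup>+x2. \<integral>\<^sup>+x1. ennreal ((\<phi> (x1, x2) - \<phi> (fst w, x2))^2) * indicator R (x1, x2) \<partial>lborel \<partial>lborel)"
      unfolding X1_def by (subst pair_snd) (measurable, simp_all add: opens)
    also have "\<dots> \<le> (\<integral>\<^sup>+x2. 4 * (\<integral>\<^sup>+x1. ennreal (x1^2 * (f' (x1, x2) (1, 0))^2) * indicator R (x1, x2) \<partial>lborel) \<partial>lborel)"
      by (rule nn_integral_mono) (rule stepD1[OF s])
    also have "\<dots> = 4 * (\<integral>\<^sup>+x2. \<integral>\<^sup>+x1. ennreal (x1^2 * (f' (x1, x2) (1, 0))^2) * indicator R (x1, x2) \<partial>lborel \<partial>lborel)"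
    proof (rule nn_integral_cmult)
      have "(\<lambda>x. ennreal ((fst x)^2 * (f' x (1, 0))^2) * indicator R x) \<in> borel_measurable borel"
        by measurable (simp add: opens)
      from meas_inner1[OF this] show "(\<lambda>x2. \<integral>\<^sup>+x1. ennreal (x1^2 * (f' (x1, x2) (1, 0))^2) * indicator R (x1, x2) \<partial>lborel) \<in> borel_measurable lborel"
        by simp
    qed
    also have "\<dots> = 4 * J1"
      unfolding J1_def by (subst pair_snd) (measurable, simp_all add: opens)
    finally show ?thesis .
  qed
  define Y where "Y = (\<lambda>w::real \<times> (real^'m). \<integral>\<^sup>+x2. ennreal ((\<phi> (fst w, x2) - \<phi> w)^2) * indicator Q x2 \<partial>lborel)"
  have stepE1: "X2 w = ennreal (b - a) * Y w" for w
  proof -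
    have "X2 w = (\<integral>\<^sup>+x1. \<integral>\<^sup>+x2. ennreal ((\<phi> (fst w, x2) - \<phi> w)^2) * indicator R (x1, x2) \<partial>lborel \<partial>lborel)"
      unfolding X2_def by (subst pair_fst) (measurable, simp_all add: opens)
    also have "\<dots> = (\<integral>\<^sup>+x1. Y w * indicator {a<..<b} x1 \<partial>lborel)"
    proof (rule nn_integral_cong)
      fix x1 :: real
      have "(\<integral>\<^sup>+x2. ennreal ((\<phi> (fst w, x2) - \<phi> w)^2) * indicator R (x1, x2) \<partial>lborel)
          = (\<integral>\<^sup>+x2. (ennreal ((\<phi> (fst w, x2) - \<phi> w)^2) * indicator Q x2) * indicator {a<..<b} x1 \<partial>lborel)"
        unfolding R_def indR by (simp add: mult_ac)
      also have "\<dots> = Y w * indicator {a<..<b} x1"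
        unfolding Y_def by (rule nn_integral_multc) (measurable, simp_all add: opens)
      finally show "(\<integral>\<^sup>+x2. ennreal ((\<phi> (fst w, x2) - \<phi> w)^2) * indicator R (x1, x2) \<partial>lborel) = Y w * indicator {a<..<b} x1" .
    qed
    also have "\<dots> = Y w * emeasure lborel {a<..<b}"
      by (rule nn_integral_cmult_indicator) simp
    also have "\<dots> = ennreal (b - a) * Y w"
      using ba by (simp add: mult.commute)
    finally show ?thesis .
  qed
  define G1 where "G1 = (\<lambda>w1. \<integral>\<^sup>+z. ennreal (gradf f' (w1, z)) * indicator Q z \<partial>lborel)"
  have stepE2: "(\<integral>\<^sup>+w2. Y (w1, w2) * indicator Q w2 \<partial>lborel) \<le> 2^m * emeasure lborel Q * (ennreal (4 * real m * B^2) * G1 w1)" for w1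
  proof -
    let ?\<psi> = "\<lambda>z. \<phi> (w1, z)"
    have "(\<integral>\<^sup>+w2. Y (w1, w2) * indicator Q w2 \<partial>lborel) = (\<integral>\<^sup>+u. \<integral>\<^sup>+v. ennreal ((?\<psi> u - ?\<psi> v)^2) * indicator Q v * indicator Q u \<partial>lborel \<partial>lborel)"
    proof (rule nn_integral_cong)
      fix u :: "real^'m"
      have "Y (w1, u) * indicator Q u = (\<integral>\<^sup>+v. ennreal ((?\<psi> v - ?\<psi> u)^2) * indicator Q v * indicator Q u \<partial>lborel)"
        unfolding Y_def fst_conv by (rule nn_integral_multc[symmetric]) (measurable, simp_all add: opens)
      also have "\<dots> = (\<integral>\<^sup>+v. ennreal ((?\<psi> u - ?\<psi> v)^2) * indicator Q v * indicator Q u \<partial>lborel)"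
        by (rule nn_integral_cong) (simp add: power2_commute)
      finally show "Y (w1, u) * indicator Q u = (\<integral>\<^sup>+v. ennreal ((?\<psi> u - ?\<psi> v)^2) * indicator Q v * indicator Q u \<partial>lborel)" .
    qed
    also have "\<dots> \<le> 2^DIM(real^'m) * emeasure lborel Q * (\<integral>\<^sup>+z. ennreal (4 * real m * B^2 * gradf f' (w1, z)) * indicator Q z \<partial>lborel)"
    proof (rule cube_poincare[OF partial2_deriv[OF d] partial2_cont[OF cf]])
      show "convex Q" unfolding Q_def by (rule cube_props)
      show "Q \<in> sets borel" by (rule Rm)
      show "(\<lambda>z. 4 * real m * B^2 * gradf f' (w1, z)) \<in> borel_measurable borel" by measurable
      show "0 \<le> 4 * real m * B^2 * gradf f' (w1, z)" for z unfolding gradf_def by (simp add: sum_nonneg)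
      fix u v z assume u: "u \<in> Q" and v: "v \<in> Q" and "z \<in> Q"
      have "(blinfun_apply (f' (w1, z) o\<^sub>L emb2) (u - v))^2 = (f' (w1, z) (0, u - v))^2" by simp
      also have "\<dots> \<le> (norm (u - v))^2 * gradf f' (w1, z)"
        unfolding gradf_def by (rule grad_bound)
      also have "\<dots> \<le> (4 * real m * B^2) * gradf f' (w1, z)"
        by (rule mult_right_mono, unfold m_def, rule norm_diff_cube)
           (use u v in \<open>auto simp: Q_def mem_cube gradf_def intro: sum_nonneg\<close>)
      finally show "(blinfun_apply (f' (w1, z) o\<^sub>L emb2) (u - v))^2 \<le> 4 * real m * B^2 * gradf f' (w1, z)" .
    qed
    also have "(\<integral>\<^sup>+z. ennreal (4 * real m * B^2 * gradf f' (w1, z)) * indicator Q z \<partial>lborel) = ennreal (4 * real m * B^2) * G1 w1"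
      unfolding G1_def
      by (subst nn_integral_cmult[symmetric]) (measurable, auto simp: opens ennreal_mult' mult.assoc intro!: nn_integral_cong)
    also have "DIM(real^'m) = m" by (simp add: m_def)
    finally show ?thesis .
  qed
  have YM: "Y \<in> borel_measurable lborel"
  proof -
    have c: "continuous_on UNIV (\<lambda>p::(real \<times> (real^'m)) \<times> (real^'m). (\<phi> (fst (fst p), snd p) - \<phi> (fst p))^2)"
      by (intro continuous_intros continuous_on_compose2[OF cphi]) auto
    have [measurable]: "(\<lambda>p::(real \<times> (real^'m)) \<times> (real^'m). (\<phi> (fst (fst p), snd p) - \<phi> (fst p))^2) \<in> borel_measurable borel"
      using c by (rule borel_measurable_continuous_onI)
    have [measurable]: "(UNIV \<times> Q :: ((real \<times> (real^'m)) \<times> (real^'m)) set) \<in> sets borel"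
      using opens by (intro borel_open open_Times) auto
    have "(\<lambda>p::(real \<times> (real^'m)) \<times> (real^'m). ennreal ((\<phi> (fst (fst p), snd p) - \<phi> (fst p))^2) * indicator (UNIV \<times> Q) p) \<in> borel_measurable borel"
      by measurable
    from lborel.borel_measurable_nn_integral_fst[OF meas_pp[OF this]] show ?thesis unfolding Y_def
      by (simp add: indicator_times)
  qed
  have G1M: "G1 \<in> borel_measurable lborel"
  proof -
    have [measurable]: "(UNIV \<times> Q :: (real \<times> (real^'m)) set) \<in> sets borel"
      using opens by (intro borel_open open_Times) auto
    have "(\<lambda>p::real \<times> (real^'m). ennreal (gradf f' p) * indicator (UNIV \<times> Q) p) \<in> borel_measurable borel"
      by measurable
    from meas_inner2[OF this] show ?thesis unfolding G1_def by (simp add: indicator_times)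
  qed
  have stepE: "(\<integral>\<^sup>+w. X2 w * indicator R' w \<partial>lborel) \<le> ennreal (b - a) * (2^m * emeasure lborel Q * (ennreal (4 * real m * B^2) * J2))"
  proof -
    have "(\<integral>\<^sup>+w. X2 w * indicator R' w \<partial>lborel) = (\<integral>\<^sup>+w. ennreal (b - a) * (Y w * indicator R' w) \<partial>lborel)"
      by (simp add: stepE1 mult.assoc)
    also have "\<dots> = ennreal (b - a) * (\<integral>\<^sup>+w. Y w * indicator R' w \<partial>lborel)"
      by (rule nn_integral_cmult) (use YM in \<open>measurable, simp add: opens\<close>)
    also have "\<dots> \<le> ennreal (b - a) * (2^m * emeasure lborel Q * (ennreal (4 * real m * B^2) * J2))"
    proof (rule mult_left_mono[OF _ zero_le])
    have "(\<integral>\<^sup>+w. Y w * indicator R' w \<partial>lborel) = (\<integral>\<^sup>+w1. \<integral>\<^sup>+w2. Y (w1, w2) * indicator R' (w1, w2) \<partial>lborel \<partial>lborel)"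
      by (rule pair_fst) (use YM in \<open>measurable, simp add: opens\<close>)
    also have "\<dots> = (\<integral>\<^sup>+w1. indicator {a'<..<b'} w1 * (\<integral>\<^sup>+w2. Y (w1, w2) * indicator Q w2 \<partial>lborel) \<partial>lborel)"
    proof (rule nn_integral_cong)
      fix w1
      have "(\<integral>\<^sup>+w2. Y (w1, w2) * indicator R' (w1, w2) \<partial>lborel) = (\<integral>\<^sup>+w2. indicator {a'<..<b'} w1 * (Y (w1, w2) * indicator Q w2) \<partial>lborel)"
        unfolding R'_def indR by (simp add: mult_ac)
      also have "\<dots> = indicator {a'<..<b'} w1 * (\<integral>\<^sup>+w2. Y (w1, w2) * indicator Q w2 \<partial>lborel)"
        by (rule nn_integral_cmult) (use YM in \<open>measurable, simp add: opens\<close>)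
      finally show "(\<integral>\<^sup>+w2. Y (w1, w2) * indicator R' (w1, w2) \<partial>lborel) = indicator {a'<..<b'} w1 * (\<integral>\<^sup>+w2. Y (w1, w2) * indicator Q w2 \<partial>lborel)" .
    qed
    also have "\<dots> \<le> (\<integral>\<^sup>+w1. indicator {a'<..<b'} w1 * (2^m * emeasure lborel Q * (ennreal (4 * real m * B^2) * G1 w1)) \<partial>lborel)"
      by (intro nn_integral_mono mult_left_mono stepE2) simp
    also have "\<dots> = (\<integral>\<^sup>+w1. (2^m * emeasure lborel Q * ennreal (4 * real m * B^2)) * (G1 w1 * indicator {a'<..<b'} w1) \<partial>lborel)"
      by (simp add: mult_ac)
    also have "\<dots> = (2^m * emeasure lborel Q * ennreal (4 * real m * B^2)) * (\<integral>\<^sup>+w1. G1 w1 * indicator {a'<..<b'} w1 \<partial>lborel)"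
      by (rule nn_integral_cmult) (use G1M in measurable)
    also have "(\<integral>\<^sup>+w1. G1 w1 * indicator {a'<..<b'} w1 \<partial>lborel) = J2"
    proof -
      have "J2 = (\<integral>\<^sup>+w1. \<integral>\<^sup>+z. ennreal (gradf f' (w1, z)) * indicator R' (w1, z) \<partial>lborel \<partial>lborel)"
        unfolding J2_def by (rule pair_fst) (measurable, simp add: opens)
      also have "\<dots> = (\<integral>\<^sup>+w1. G1 w1 * indicator {a'<..<b'} w1 \<partial>lborel)"
      proof (rule nn_integral_cong)
        fix w1
        have "(\<integral>\<^sup>+z. ennreal (gradf f' (w1, z)) * indicator R' (w1, z) \<partial>lborel) = (\<integral>\<^sup>+z. (ennreal (gradf f' (w1, z)) * indicator Q z) * indicator {a'<..<b'} w1 \<partial>lborel)"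
          unfolding R'_def indR by (simp add: mult_ac)
        also have "\<dots> = G1 w1 * indicator {a'<..<b'} w1"
          unfolding G1_def by (rule nn_integral_multc) (measurable, simp add: opens)
        finally show "(\<integral>\<^sup>+z. ennreal (gradf f' (w1, z)) * indicator R' (w1, z) \<partial>lborel) = G1 w1 * indicator {a'<..<b'} w1" .
      qed
      finally show ?thesis by simp
    qed
    finally show "(\<integral>\<^sup>+w. Y w * indicator R' w \<partial>lborel) \<le> 2^m * emeasure lborel Q * (ennreal (4 * real m * B^2) * J2)"
      by (simp add: mult_ac)
    qed
    finally show ?thesis .
  qed
  define r where "r = (b' - a') * (2 * B) ^ m"
  have r0: "r > 0" unfolding r_def using ab' QB by simp
  have A1: "(\<integral>\<^sup>+w. X1 w * indicator R' w \<partial>lborel) \<le> ennreal r * (4 * J1)"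
  proof -
    have "(\<integral>\<^sup>+w. X1 w * indicator R' w \<partial>lborel) \<le> (\<integral>\<^sup>+w. (4 * J1) * indicator R' w \<partial>lborel)"
      by (rule nn_integral_mono) (auto split: split_indicator intro: stepD)
    also have "\<dots> = (4 * J1) * emeasure lborel R'"
      by (rule nn_integral_cmult_indicator) simp
    finally show ?thesis unfolding mR' r_def by (simp add: mult.commute)
  qed
  have e2: "2 * (ennreal (b - a) * (2^m * emeasure lborel Q * (ennreal (4 * real m * B^2) * J2)))
      = ennreal r * (ennreal (2^(m+4) * real m * B^2) * J2)"
  proof -
    have "2 * (ennreal (b - a) * (2^m * emeasure lborel Q * (ennreal (4 * real m * B^2) * J2)))
        = ennreal (2 * (b - a) * 2^m * (2 * B)^m * (4 * real m * B^2)) * J2"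
    proof -
      have q: "emeasure lborel Q = ennreal ((2 * B)^m)" by (rule QB(1))
      have b0: "0 \<le> b - a" using ba by simp
      have B0': "0 \<le> B" using B0 by simp
      obtain dd where dd: "dd = b - a" by blast
      have d0: "0 \<le> dd" using b0 dd by simp
      show ?thesis unfolding q dd[symmetric] using d0 B0'
        by (simp add: ennreal_mult' ennreal_mult'' ennreal_power[symmetric] mult_ac)
    qed
    also have "2 * (b - a) * 2^m * (2 * B)^m * (4 * real m * B^2) = r * (2^(m+4) * real m * B^2)"
      unfolding r_def len by (simp add: power_add)
    finally show ?thesis using r0 by (simp add: ennreal_mult mult_ac)
  qed
  have main: "ennreal V * ennreal r \<le> ennreal r * (8 * J1 + ennreal (2^(m+4) * real m * B^2) * J2)"
  proof -
    have "ennreal V * ennreal r \<le> 2 * (\<integral>\<^sup>+w. X1 w * indicator R' w \<partial>lborel) + 2 * (\<integral>\<^sup>+w. X2 w * indicator R' w \<partial>lborel)"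
      using stepB unfolding mR' r_def .
    also have "\<dots> \<le> 2 * (ennreal r * (4 * J1)) + 2 * (ennreal (b - a) * (2^m * emeasure lborel Q * (ennreal (4 * real m * B^2) * J2)))"
      by (intro add_mono mult_left_mono A1 stepE) auto
    also have "\<dots> = ennreal r * (8 * J1 + ennreal (2^(m+4) * real m * B^2) * J2)"
      unfolding e2 by (simp add: distrib_left mult_ac)
    finally show ?thesis .
  qed
  have "ennreal V = (ennreal V * ennreal r) * ennreal (1 / r)"
    using r0 by (simp add: ennreal_mult[symmetric] mult.assoc)
  also have "\<dots> \<le> (ennreal r * (8 * J1 + ennreal (2^(m+4) * real m * B^2) * J2)) * ennreal (1 / r)"
    by (rule mult_right_mono[OF main]) simp
  also have "\<dots> = (ennreal r * ennreal (1 / r)) * (8 * J1 + ennreal (2^(m+4) * real m * B^2) * J2)"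
    by (simp only: mult_ac)
  also have "ennreal r * ennreal (1 / r) = 1"
    using r0 by (simp add: ennreal_mult[symmetric])
  also have "1 * (8 * J1 + ennreal (2^(m+4) * real m * B^2) * J2) = 8 * J1 + ennreal (2^(m+4) * real m * B^2) * J2"
    by simp
  finally have FIN: "ennreal V \<le> 8 * J1 + ennreal (2^(m+4) * real m * B^2) * J2" .
  have e1: "V = (LINT x:slab a b B|lborel. (\<phi> x - (LINT y:slab a b B|lborel. \<phi> y) / measure lborel (slab a b B :: (real \<times> (real^'m)) set))^2)"
    unfolding V_def R_def ..
  have e2: "J1 = (\<integral>\<^sup>+x. ennreal ((fst x)^2 * (f' x (1, 0))^2) * indicator (slab a b B) x \<partial>lborel)"
    unfolding J1_def R_def ..
  have e3: "J2 = (\<integral>\<^sup>+x. ennreal (gradf f' x) * indicator (slab a' b' B) x \<partial>lborel)"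
    unfolding J2_def R'_def ..
  have e4: "(2::real)^(m+4) * real m * B^2 = 2^(CARD('m)+4) * real CARD('m) * B^2" unfolding m_def ..
  show ?thesis using FIN unfolding e1 e2 e3 e4 .
qed

lemma ppow_pos: "0 \<le> ppow a p p'" unfolding ppow_def by simp

lemma W1:
  fixes t d d' y :: real
  assumes t: "0 < t" and d: "0 \<le> d" "d < 1" and d': "0 \<le> d'" "d' < 1"
    and y: "0 < y" "y < ppow t (1 / (1 - d)) (1 / (1 - d'))"
  shows "y^2 \<le> t^2 * ppow y (2 * d) (2 * d')"
proof -
  have y2: "y^2 = y powr 2" using y by (simp add: powr_numeral)
  have t2: "t^2 = t powr 2" using t by (simp add: powr_numeral)
  show ?thesis
  proof (cases "t \<le> 1")
    case True
    let ?A = "t powr (1 / (1 - d))"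
    have A: "y < ?A" using y True unfolding ppow_def by simp
    have "?A \<le> 1" using True t d by (simp add: powr_le1)
    hence y1: "y \<le> 1" using A by linarith
    have "y powr 2 = y powr (2 * d) * y powr (2 - 2 * d)" by (simp add: powr_add[symmetric])
    also have "\<dots> \<le> y powr (2 * d) * ?A powr (2 - 2 * d)"
      by (rule mult_left_mono, rule powr_mono2) (use y A d in auto)
    also have "?A powr (2 - 2 * d) = t powr 2"
    proof -
      have e: "1 / (1 - d) * (2 - 2 * d) = 2" using d by (simp add: field_simps)
      show ?thesis by (simp only: powr_powr e)
    qed
    finally have c: "y^2 \<le> y powr (2 * d) * t^2" unfolding y2 t2 .
    have "ppow y (2 * d) (2 * d') = y powr (2 * d)" using y1 unfolding ppow_def by simp
    thus ?thesis using c by (simp only: mult.commute)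
  next
    case False
    let ?A = "t powr (1 / (1 - d'))"
    have A: "y < ?A" using y False unfolding ppow_def by simp
    show ?thesis
    proof (cases "y \<le> 1")
      case True
      have "y powr 2 \<le> y powr (2 * d)"
        by (rule powr_mono') (use y True d in auto)
      also have "\<dots> \<le> t powr 2 * y powr (2 * d)"
      proof -
        have "1 \<le> t powr 2" using False by (simp add: ge_one_powr_ge_zero)
        thus ?thesis by (metis mult_1 mult_right_mono powr_ge_zero)
      qed
      finally have c: "y^2 \<le> t^2 * y powr (2 * d)" unfolding y2 t2 .
      have "ppow y (2 * d) (2 * d') = y powr (2 * d)" using True unfolding ppow_def by simp
      thus ?thesis using c by (simp only:)
    next
      case y1: False
      have "y powr 2 = y powr (2 * d') * y powr (2 - 2 * d')" by (simp add: powr_add[symmetric])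
      also have "\<dots> \<le> y powr (2 * d') * ?A powr (2 - 2 * d')"
        by (rule mult_left_mono, rule powr_mono2) (use y A d' in auto)
      also have "?A powr (2 - 2 * d') = t powr 2"
      proof -
        have e: "1 / (1 - d') * (2 - 2 * d') = 2" using d' by (simp add: field_simps)
        show ?thesis by (simp only: powr_powr e)
      qed
      finally have c: "y^2 \<le> y powr (2 * d') * t^2" unfolding y2 t2 .
      have "ppow y (2 * d) (2 * d') = y powr (2 * d')" using y1 False unfolding ppow_def by simp
    thus ?thesis using c by (simp only: mult.commute)
    qed
  qed
qed

lemma B_sq:
  fixes t d e al :: real
  assumes t: "0 < t" and al: "(1 - d) * al = 1"
  shows "(t powr ((1 + e - d) * al))^2 = t^2 * (t powr al) powr (2 * e)"
proof -
  have "(t powr ((1 + e - d) * al))^2 = (t powr ((1 + e - d) * al)) powr 2"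
    using t by (simp add: powr_numeral)
  also have "\<dots> = t powr (2 * ((1 + e - d) * al))"
    by (simp only: powr_powr mult.commute)
  also have "2 * ((1 + e - d) * al) = 2 + al * (2 * e)"
    using al by (simp add: algebra_simps)
  also have "t powr (2 + al * (2 * e)) = t^2 * (t powr al) powr (2 * e)"
    using t by (simp add: powr_add powr_powr powr_numeral)
  finally show ?thesis .
qed

lemma A_le_2y:
  fixes A y p :: real
  assumes "0 < A" "A \<le> 2 * y" "0 \<le> p"
  shows "A powr p \<le> 2 powr p * y powr p"
proof -
  have "A powr p \<le> (2 * y) powr p" by (rule powr_mono2) (use assms in auto)
  also have "\<dots> = 2 powr p * y powr p" using assms by (simp add: powr_mult)
  finally show ?thesis .
qed

lemma W2:
  fixes t d d' e e' y :: real
  assumes t: "0 < t" and d: "0 \<le> d" "d < 1" and d': "0 \<le> d'" "d' < 1" and e: "0 \<le> e" "0 \<le> e'"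
    and y1: "ppow t (1 / (1 - d)) (1 / (1 - d')) / 2 \<le> y" and y2: "y \<le> ppow t (1 / (1 - d)) (1 / (1 - d'))"
  shows "(ppow t ((1 + e - d) * (1 / (1 - d))) ((1 + e' - d') * (1 / (1 - d'))))^2
         \<le> 2 powr (2 * e + 2 * e') * t^2 * ppow y (2 * e) (2 * e')"
proof (cases "t \<le> 1")
  case True
  let ?A = "t powr (1 / (1 - d))"
  have Ap: "0 < ?A" using t by simp
  have A1: "?A \<le> 1" using True t d by (simp add: powr_le1)
  have yA: "?A / 2 \<le> y" "y \<le> ?A" using y1 y2 True unfolding ppow_def by auto
  have "(ppow t ((1 + e - d) * (1 / (1 - d))) ((1 + e' - d') * (1 / (1 - d'))))^2 = t^2 * ?A powr (2 * e)"
    using True B_sq[OF t, of d "1 / (1 - d)" e] d unfolding ppow_def by simp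
  also have "\<dots> \<le> t^2 * (2 powr (2 * e) * y powr (2 * e))"
    by (rule mult_left_mono, rule A_le_2y) (use Ap yA e in auto)
  also have "\<dots> \<le> t^2 * (2 powr (2 * e + 2 * e') * y powr (2 * e))"
    by (intro mult_left_mono mult_right_mono powr_mono) (use e in auto)
  also have "y powr (2 * e) = ppow y (2 * e) (2 * e')" using yA A1 unfolding ppow_def by auto
  finally show ?thesis by (simp add: mult_ac)
next
  case False
  let ?A = "t powr (1 / (1 - d'))"
  have Ap: "0 < ?A" using t by simp
  have A1: "1 \<le> ?A" using False d' by (simp add: ge_one_powr_ge_zero)
  have yA: "?A / 2 \<le> y" "y \<le> ?A" using y1 y2 False unfolding ppow_def by auto
  have "(ppow t ((1 + e - d) * (1 / (1 - d))) ((1 + e' - d') * (1 / (1 - d'))))^2 = t^2 * ?A powr (2 * e')"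
    using False B_sq[OF t, of d' "1 / (1 - d')" e'] d' unfolding ppow_def by simp
  also have "\<dots> \<le> 2 powr (2 * e + 2 * e') * t^2 * ppow y (2 * e) (2 * e')"
  proof (cases "y \<le> 1")
    case y1: True
    have "?A powr (2 * e') \<le> 2 powr (2 * e')"
      by (rule powr_mono2) (use yA y1 e Ap in auto)
    also have "\<dots> = 2 powr (2 * e + 2 * e') * (1/2) powr (2 * e)"
      by (simp add: powr_add powr_divide)
    also have "\<dots> \<le> 2 powr (2 * e + 2 * e') * y powr (2 * e)"
      by (intro mult_left_mono powr_mono2) (use yA A1 e in auto)
    finally have "?A powr (2 * e') \<le> 2 powr (2 * e + 2 * e') * y powr (2 * e)" .
    moreover have "ppow y (2 * e) (2 * e') = y powr (2 * e)" using y1 unfolding ppow_def by simp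
    ultimately show ?thesis by (simp add: mult_ac mult_left_mono)
  next
    case y1: False
    have "?A powr (2 * e') \<le> 2 powr (2 * e') * y powr (2 * e')"
      by (rule A_le_2y) (use Ap yA e in auto)
    also have "\<dots> \<le> 2 powr (2 * e + 2 * e') * y powr (2 * e')"
      by (intro mult_right_mono powr_mono) (use e in auto)
    finally have "?A powr (2 * e') \<le> 2 powr (2 * e + 2 * e') * y powr (2 * e')" .
    moreover have "ppow y (2 * e) (2 * e') = y powr (2 * e')" using y1 unfolding ppow_def by simp
    ultimately show ?thesis by (simp add: mult_ac mult_left_mono)
  qed
  finally show ?thesis .
qed

lemma cont_bounded_on:
  fixes h :: "'a::euclidean_space \<Rightarrow> real"
  assumes c: "continuous_on UNIV h" and b: "bounded S"
  shows "\<exists>M. \<forall>x\<in>S. \<bar>h x\<bar> \<le> M"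
proof -
  have "compact (closure S)" using b by (simp add: compact_closure)
  hence "compact (h ` closure S)"
    by (rule compact_continuous_image[OF continuous_on_subset[OF c subset_UNIV]])
  then obtain M where M: "\<And>y. y \<in> h ` closure S \<Longrightarrow> norm y \<le> M"
    using compact_imp_bounded bounded_iff by metis
  have "\<forall>x\<in>S. \<bar>h x\<bar> \<le> M"
  proof
    fix x assume "x \<in> S"
    hence "h x \<in> h ` closure S" using closure_subset by blast
    thus "\<bar>h x\<bar> \<le> M" using M by fastforce
  qed
  thus ?thesis by blast
qed

lemma G_int:
  fixes f' :: "real \<times> (real^'m::finite) \<Rightarrow> (real \<times> (real^'m)) \<Rightarrow>\<^sub>L real" and S :: "(real \<times> (real^'m)) set"
  assumes cf: "continuous_on UNIV f'" and Sb: "bounded S" and Sm: "S \<in> sets borel"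
    and w1m: "w1 \<in> borel_measurable borel" and w2m: "w2 \<in> borel_measurable borel"
    and w1b: "\<And>x. x \<in> S \<Longrightarrow> 0 \<le> w1 x \<and> w1 x \<le> W"
    and w2b: "\<And>x. x \<in> S \<Longrightarrow> 0 \<le> w2 x \<and> w2 x \<le> W"
  shows "set_integrable lborel S (\<lambda>x. w1 x * (f' x (1, 0))^2 + w2 x * gradf f' x)"
proof -
  have c1: "continuous_on UNIV (\<lambda>x. (f' x (1, 0))^2)"
    by (intro continuous_intros blinfun.continuous_on cf)
  have c2: "continuous_on UNIV (gradf f')"
    unfolding gradf_def by (intro continuous_intros blinfun.continuous_on cf)
  obtain M1 where M1: "\<And>x. x \<in> S \<Longrightarrow> \<bar>(f' x (1, 0))^2\<bar> \<le> M1" using cont_bounded_on[OF c1 Sb] by blast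
  obtain M2 where M2: "\<And>x. x \<in> S \<Longrightarrow> \<bar>gradf f' x\<bar> \<le> M2" using cont_bounded_on[OF c2 Sb] by blast
  show ?thesis
  proof (rule set_integrable_bdd[OF Sm Sb, where K="W * M1 + W * M2"])
    show "(\<lambda>x. w1 x * (f' x (1, 0))^2 + w2 x * gradf f' x) \<in> borel_measurable borel"
    proof -
      have m1: "(\<lambda>x. (f' x (1, 0))^2) \<in> borel_measurable borel" by (rule borel_measurable_continuous_onI[OF c1])
      have m2: "gradf f' \<in> borel_measurable borel" by (rule borel_measurable_continuous_onI[OF c2])
      show ?thesis by (intro borel_measurable_add borel_measurable_times w1m w2m m1 m2)
    qed
    fix x assume x: "x \<in> S"
    have g0: "0 \<le> gradf f' x" unfolding gradf_def by (simp add: sum_nonneg)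
    have a1: "0 \<le> w1 x * (f' x (1, 0))^2" using w1b[OF x] by simp
    have b1: "w1 x * (f' x (1, 0))^2 \<le> W * M1"
      by (rule mult_mono) (use w1b[OF x] M1[OF x] in auto)
    have a2: "0 \<le> w2 x * gradf f' x" using w2b[OF x] g0 by simp
    have b2: "w2 x * gradf f' x \<le> W * M2"
      by (rule mult_mono) (use w2b[OF x] M2[OF x] g0 in auto)
    show "\<bar>w1 x * (f' x (1, 0))^2 + w2 x * gradf f' x\<bar> \<le> W * M1 + W * M2"
      using a1 b1 a2 b2 by linarith
  qed
qed

lemma final_step:
  fixes \<phi> :: "real \<times> (real^'m::finite) \<Rightarrow> real" and f' :: "real \<times> (real^'m) \<Rightarrow> (real \<times> (real^'m)) \<Rightarrow>\<^sub>L real"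
    and w1 w2 :: "real \<times> (real^'m) \<Rightarrow> real"
  assumes d: "\<And>x. (\<phi> has_derivative blinfun_apply (f' x)) (at x)"
    and cf: "continuous_on UNIV f'"
    and aa: "a \<le> a'" and ab': "a' < b'" and bb: "b' \<le> b" and len: "b - a = 2 * (b' - a')" and B0: "0 < B"
    and hw1: "\<And>s x. s \<in> {a'<..<b'} \<Longrightarrow> x \<in> {a..s} \<Longrightarrow> (x - a)^2 \<le> x^2"
    and hw2: "\<And>s x. s \<in> {a'<..<b'} \<Longrightarrow> x \<in> {s..b} \<Longrightarrow> (x - b)^2 \<le> x^2"
    and t: "0 < t" and Cw: "0 \<le> Cw"
    and w1m: "w1 \<in> borel_measurable borel" and w2m: "w2 \<in> borel_measurable borel"
    and ww1: "\<And>x. x \<in> slab a b B \<Longrightarrow> (fst x)^2 \<le> t^2 * w1 x"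
    and ww2: "\<And>x. x \<in> slab a' b' B \<Longrightarrow> B^2 \<le> Cw * t^2 * w2 x"
    and w10: "\<And>x. 0 \<le> w1 x" and w20: "\<And>x. 0 \<le> w2 x"
    and sub: "slab a' b' B \<subseteq> (slab a b B :: (real \<times> (real^'m)) set)"
    and Gi: "set_integrable lborel (slab a b B) (\<lambda>x. w1 x * (f' x (1, 0))^2 + w2 x * gradf f' x)"
  shows "(LINT x:slab a b B|lborel. (\<phi> x - (LINT y:slab a b B|lborel. \<phi> y) / measure lborel (slab a b B :: (real \<times> (real^'m)) set))^2)
     \<le> (8 + 2^(CARD('m)+4) * real CARD('m) * Cw) * t^2 * (LINT x:slab a b B|lborel. w1 x * (f' x (1, 0))^2 + w2 x * gradf f' x)"
proof -
  define S where "S = (slab a b B :: (real \<times> (real^'m)) set)"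
  define S' where "S' = (slab a' b' B :: (real \<times> (real^'m)) set)"
  define c2 where "c2 = (2::real)^(CARD('m)+4) * real CARD('m)"
  define K where "K = 8 + c2 * Cw"
  define G where "G = (\<lambda>x. w1 x * (f' x (1, 0))^2 + w2 x * gradf f' x)"
  define V where "V = (LINT x:S|lborel. (\<phi> x - (LINT y:S|lborel. \<phi> y) / measure lborel S)^2)"
  have c20: "0 \<le> c2" unfolding c2_def by simp
  have K0: "0 \<le> K" unfolding K_def using c20 Cw by simp
  have g0: "0 \<le> gradf f' x" for x unfolding gradf_def by (simp add: sum_nonneg)
  have G0: "0 \<le> G x" for x unfolding G_def using w10 w20 g0 by (simp add: add_nonneg_nonneg)
  have cfv: "continuous_on UNIV (\<lambda>x. f' x v)" for v
    by (intro continuous_intros blinfun.continuous_on cf)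
  have [measurable]: "(\<lambda>x. f' x v) \<in> borel_measurable borel" for v
    using cfv by (rule borel_measurable_continuous_onI)
  have [measurable]: "gradf f' \<in> borel_measurable borel"
    unfolding gradf_def by measurable
  have [measurable]: "w1 \<in> borel_measurable borel" "w2 \<in> borel_measurable borel" using w1m w2m by auto
  have [measurable]: "fst \<in> (borel :: (real \<times> (real^'m)) measure) \<rightarrow>\<^sub>M borel"
    by (intro borel_measurable_continuous_onI continuous_intros)
  have Sm[measurable]: "S \<in> sets borel" "S' \<in> sets borel" unfolding S_def S'_def by (auto intro: slab_props)
  have core': "ennreal V \<le> 8 * (\<integral>\<^sup>+x. ennreal ((fst x)^2 * (f' x (1, 0))^2) * indicator S x \<partial>lborel)
      + ennreal (c2 * B^2) * (\<integral>\<^sup>+x. ennreal (gradf f' x) * indicator S' x \<partial>lborel)"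
    unfolding V_def S_def S'_def c2_def using core[OF d cf aa ab' bb len B0 hw1 hw2] by (simp add: mult.assoc)
  have pw: "8 * (ennreal ((fst x)^2 * (f' x (1, 0))^2) * indicator S x) + ennreal (c2 * B^2) * (ennreal (gradf f' x) * indicator S' x)
      \<le> ennreal (K * t^2) * (ennreal (G x) * indicator S x)" for x
  proof (cases "x \<in> S")
    case False
    hence "x \<notin> S'" using sub unfolding S_def S'_def by auto
    thus ?thesis using False by simp
  next
    case True
    let ?h = "(f' x (1, 0))^2" and ?g = "gradf f' x"
    have h0: "0 \<le> ?h" by simp
    have r1: "8 * ((fst x)^2 * ?h) \<le> 8 * (t^2 * w1 x * ?h)"
      using ww1[OF True[unfolded S_def]] h0 by (simp add: mult_right_mono)
    have r2: "(if x \<in> S' then c2 * B^2 * ?g else 0) \<le> c2 * Cw * (t^2 * w2 x * ?g)"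
    proof (cases "x \<in> S'")
      case True
      have "B^2 * ?g \<le> (Cw * t^2 * w2 x) * ?g"
        using ww2[OF True[unfolded S'_def]] g0 by (simp add: mult_right_mono)
      hence "c2 * (B^2 * ?g) \<le> c2 * ((Cw * t^2 * w2 x) * ?g)" using c20 by (simp add: mult_left_mono)
      thus ?thesis using True by (simp add: mult_ac)
    qed (use c20 Cw w20 g0 in simp)
    have r3: "8 * (t^2 * w1 x * ?h) + c2 * Cw * (t^2 * w2 x * ?g) \<le> K * t^2 * G x"
    proof -
      have a: "0 \<le> t^2 * w1 x * ?h" using w10 by simp
      have b: "0 \<le> t^2 * w2 x * ?g" using w20 g0 by simp
      have "8 * (t^2 * w1 x * ?h) \<le> K * (t^2 * w1 x * ?h)" using a c20 Cw unfolding K_def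
        by (intro mult_right_mono) auto
      moreover have "c2 * Cw * (t^2 * w2 x * ?g) \<le> K * (t^2 * w2 x * ?g)" using b unfolding K_def
        by (intro mult_right_mono) auto
      ultimately show ?thesis unfolding G_def by (simp add: algebra_simps)
    qed
    have "8 * (ennreal ((fst x)^2 * ?h) * indicator S x) + ennreal (c2 * B^2) * (ennreal ?g * indicator S' x)
        = ennreal (8 * ((fst x)^2 * ?h) + (if x \<in> S' then c2 * B^2 * ?g else 0))"
      using True c20 g0 by (simp add: ennreal_plus ennreal_mult' indicator_def)
    also have "\<dots> \<le> ennreal (K * t^2 * G x)"
      using r1 r2 r3 by (intro ennreal_leI) linarith
    also have "\<dots> = ennreal (K * t^2) * (ennreal (G x) * indicator S x)"
      using True K0 by (simp add: ennreal_mult')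
    finally show ?thesis .
  qed
  have "ennreal V \<le> (\<integral>\<^sup>+x. 8 * (ennreal ((fst x)^2 * (f' x (1, 0))^2) * indicator S x) + ennreal (c2 * B^2) * (ennreal (gradf f' x) * indicator S' x) \<partial>lborel)"
    using core' by (subst nn_integral_add) (measurable, simp_all add: nn_integral_cmult)
  also have "\<dots> \<le> (\<integral>\<^sup>+x. ennreal (K * t^2) * (ennreal (G x) * indicator S x) \<partial>lborel)"
    by (rule nn_integral_mono) (rule pw)
  also have "\<dots> = ennreal (K * t^2) * (\<integral>\<^sup>+x. ennreal (G x) * indicator S x \<partial>lborel)"
    by (rule nn_integral_cmult) (unfold G_def, measurable)
  also have "(\<integral>\<^sup>+x. ennreal (G x) * indicator S x \<partial>lborel) = ennreal (LINT x:S|lborel. G x)"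
    by (rule nn_set_integral_eq) (use Gi G0 in \<open>auto simp: S_def G_def\<close>)
  also have "ennreal (K * t^2) * ennreal (LINT x:S|lborel. G x) = ennreal (K * t^2 * (LINT x:S|lborel. G x))"
    using K0 by (simp add: ennreal_mult')
  finally have "V \<le> K * t^2 * (LINT x:S|lborel. G x)"
  proof (subst (asm) ennreal_le_iff)
    show "0 \<le> K * t^2 * (LINT x:S|lborel. G x)"
    proof -
      have "0 \<le> (LINT x:S|lborel. G x)" unfolding set_lebesgue_integral_def
        by (rule integral_nonneg_AE) (simp add: G0)
      thus ?thesis using K0 by simp
    qed
  qed
  thus ?thesis unfolding V_def S_def K_def c2_def G_def by (simp add: mult_ac)
qed

lemma ppow_le_bound:
  assumes "0 \<le> y" "y \<le> A" "0 \<le> p" "0 \<le> p'"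
  shows "ppow y p p' \<le> 1 + A powr p'"
proof (cases "y \<le> 1")
  case True
  have "y powr p \<le> 1" using True assms by (simp add: powr_le1)
  thus ?thesis using True unfolding ppow_def by (simp add: add_increasing2)
next
  case False
  have "y powr p' \<le> A powr p'" by (rule powr_mono2) (use assms False in auto)
  thus ?thesis using False unfolding ppow_def by simp
qed

lemma ppow_meas[measurable]:
  "(\<lambda>x::real \<times> (real^'m::finite). ppow \<bar>fst x\<bar> p p') \<in> borel_measurable borel"
proof -
  have [measurable]: "fst \<in> (borel :: (real \<times> (real^'m)) measure) \<rightarrow>\<^sub>M borel"
    by (intro borel_measurable_continuous_onI continuous_intros)
  show ?thesis unfolding ppow_def by measurable
qed

lemma case_lemma:
  fixes \<phi> :: "real \<times> (real^'m::finite) \<Rightarrow> real" and f' :: "real \<times> (real^'m) \<Rightarrow> (real \<times> (real^'m)) \<Rightarrow>\<^sub>L real"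
    and d1 d1' d2 d2' t a b a' b' A B :: real and S :: "(real \<times> (real^'m)) set"
  assumes h: "1/2 \<le> d1" "d1 < 1" "0 \<le> d1'" "d1' < 1" "0 \<le> d2" "0 \<le> d2'"
    and t: "0 < t"
    and d: "\<And>x. (\<phi> has_derivative blinfun_apply (f' x)) (at x)"
    and cf: "continuous_on UNIV f'"
    and A_def: "A = ppow t (1 / (1 - d1)) (1 / (1 - d1'))"
    and B_def: "B = ppow t ((1 + d2 - d1) * (1 / (1 - d1))) ((1 + d2' - d1') * (1 / (1 - d1')))"
    and aa: "a \<le> a'" and ab': "a' < b'" and bb: "b' \<le> b" and len: "b - a = 2 * (b' - a')"
    and hw1: "\<And>s x. s \<in> {a'<..<b'} \<Longrightarrow> x \<in> {a..s} \<Longrightarrow> (x - a)^2 \<le> x^2"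
    and hw2: "\<And>s x. s \<in> {a'<..<b'} \<Longrightarrow> x \<in> {s..b} \<Longrightarrow> (x - b)^2 \<le> x^2"
    and S1: "\<And>x::real \<times> (real^'m). x \<in> slab a b B \<Longrightarrow> 0 < \<bar>fst x\<bar> \<and> \<bar>fst x\<bar> < A"
    and S2: "\<And>x::real \<times> (real^'m). x \<in> slab a' b' B \<Longrightarrow> A / 2 \<le> \<bar>fst x\<bar> \<and> \<bar>fst x\<bar> \<le> A"
    and sub: "slab a' b' B \<subseteq> (slab a b B :: (real \<times> (real^'m)) set)"
    and SS: "S = slab a b B"
  shows "1 / (8 + 2^(CARD('m)+4) * real CARD('m) * 2 powr (2 * d2 + 2 * d2')) * t powr (-2)
           * (LINT x:S|lborel. (\<phi> x - (LINT y:S|lborel. \<phi> y) / measure lborel S)^2)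
         \<le> (LINT x:S|lborel. ppow \<bar>fst x\<bar> (2 * d1) (2 * d1') * (f' x (1, 0))^2 + ppow \<bar>fst x\<bar> (2 * d2) (2 * d2') * gradf f' x)"
proof -
  define Cw where "Cw = (2::real) powr (2 * d2 + 2 * d2')"
  define K where "K = 8 + 2^(CARD('m)+4) * real CARD('m) * Cw"
  define w1 where "w1 = (\<lambda>x::real \<times> (real^'m). ppow \<bar>fst x\<bar> (2 * d1) (2 * d1'))"
  define w2 where "w2 = (\<lambda>x::real \<times> (real^'m). ppow \<bar>fst x\<bar> (2 * d2) (2 * d2'))"
  have Cw0: "0 \<le> Cw" unfolding Cw_def by simp
  have K0: "0 < K" unfolding K_def using Cw0 by (simp add: add_pos_nonneg)
  have A0: "0 < A" unfolding A_def ppow_def using t by simp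
  have B0: "0 < B" unfolding B_def ppow_def using t by simp
  have ww1: "(fst x)^2 \<le> t^2 * w1 x" if x: "x \<in> slab a b B" for x :: "real \<times> (real^'m)"
  proof -
    have "\<bar>fst x\<bar>^2 \<le> t^2 * ppow \<bar>fst x\<bar> (2 * d1) (2 * d1')"
      by (rule W1[OF t]) (use h S1[OF x] A_def in auto)
    thus ?thesis unfolding w1_def by simp
  qed
  have ww2: "B^2 \<le> Cw * t^2 * w2 x" if x: "x \<in> slab a' b' B" for x :: "real \<times> (real^'m)"
  proof -
    have "B^2 \<le> 2 powr (2 * d2 + 2 * d2') * t^2 * ppow \<bar>fst x\<bar> (2 * d2) (2 * d2')"
      unfolding B_def by (rule W2[OF t]) (use h S2[OF x] A_def in auto)
    thus ?thesis unfolding w2_def Cw_def .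
  qed
  have Gi: "set_integrable lborel (slab a b B) (\<lambda>x. w1 x * (f' x (1, 0))^2 + w2 x * gradf f' x)"
  proof (rule G_int[OF cf _ _ _ _, where W = "1 + A powr (2 * d1') + A powr (2 * d2')"])
    show "bounded (slab a b B :: (real \<times> (real^'m)) set)" "(slab a b B :: (real \<times> (real^'m)) set) \<in> sets borel" by (rule slab_props)+
    show "w1 \<in> borel_measurable borel" "w2 \<in> borel_measurable borel" unfolding w1_def w2_def by measurable
    fix x :: "real \<times> (real^'m)" assume x: "x \<in> slab a b B"
    have "w1 x \<le> 1 + A powr (2 * d1')" unfolding w1_def by (rule ppow_le_bound) (use S1[OF x] h in auto)
    thus "0 \<le> w1 x \<and> w1 x \<le> 1 + A powr (2 * d1') + A powr (2 * d2')"
      using powr_ge_zero[of A "2 * d2'"] ppow_pos[of "\<bar>fst x\<bar>" "2 * d1" "2 * d1'"] unfolding w1_def by linarith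
    have "w2 x \<le> 1 + A powr (2 * d2')" unfolding w2_def by (rule ppow_le_bound) (use S1[OF x] h in auto)
    thus "0 \<le> w2 x \<and> w2 x \<le> 1 + A powr (2 * d1') + A powr (2 * d2')"
      using powr_ge_zero[of A "2 * d1'"] ppow_pos[of "\<bar>fst x\<bar>" "2 * d2" "2 * d2'"] unfolding w2_def by linarith
  qed
  have fs: "(LINT x:slab a b B|lborel. (\<phi> x - (LINT y:slab a b B|lborel. \<phi> y) / measure lborel (slab a b B :: (real \<times> (real^'m)) set))^2)
     \<le> (8 + 2^(CARD('m)+4) * real CARD('m) * Cw) * t^2 * (LINT x:slab a b B|lborel. w1 x * (f' x (1, 0))^2 + w2 x * gradf f' x)"
    by (rule final_step[OF d cf aa ab' bb len B0 hw1 hw2 t Cw0 _ _ ww1 ww2 _ _ sub Gi])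
       (auto simp: w1_def w2_def ppow_pos)
  have tp: "t powr (-2) = 1 / t^2" using t by (simp add: powr_minus powr_numeral divide_inverse)
  show ?thesis
    using fs K0 t unfolding SS tp K_def[symmetric] w1_def w2_def Cw_def[symmetric]
    by (simp add: field_simps)
qed

lemma sq_le1: "0 \<le> u \<Longrightarrow> u \<le> v \<Longrightarrow> (u::real)^2 \<le> v^2"
  by (rule power_mono) auto

theorem proposition3p7:
  fixes d1 d1' d2 d2' :: real
  assumes "1/2 \<le> d1" "d1 < 1" "0 \<le> d1'" "d1' < 1" "0 \<le> d2" "0 \<le> d2'"
  shows "\<exists>lam>0. \<forall>C \<in> {Cplus d1 d1' d2 d2', Cminus d1 d1' d2 d2'}.
           \<forall>(\<phi> :: real \<times> (real^'m::finite) \<Rightarrow> real) t. Cc1 \<phi> \<longrightarrow> t > 0 \<longrightarrow>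
             (LINT x : C t | lborel. Gamma_delta d1 d1' d2 d2' \<phi> x)
             \<ge> lam * t powr (-2) *
               (LINT x : C t | lborel.
                  (\<phi> x - (LINT y : C t | lborel. \<phi> y) / measure lborel (C t))\<^sup>2)"
proof -
  define K where "K = 8 + 2^(CARD('m)+4) * real CARD('m) * 2 powr (2 * d2 + 2 * d2')"
  have K0: "0 < K" unfolding K_def by (simp add: add_pos_nonneg)
  show ?thesis
  proof (rule exI[where x = "1 / K"], intro conjI ballI allI impI)
    show "0 < 1 / K" using K0 by simp
  next
    fix C :: "real \<Rightarrow> (real \<times> (real^'m)) set" and \<phi> :: "real \<times> (real^'m) \<Rightarrow> real" and t :: real
    assume C: "C \<in> {Cplus d1 d1' d2 d2', Cminus d1 d1' d2 d2'}" and cc: "Cc1 \<phi>" and t: "0 < t"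
    from cc obtain f' where d: "\<And>x. (\<phi> has_derivative blinfun_apply (f' x)) (at x)" and cf: "continuous_on UNIV f'"
      unfolding Cc1_def by blast
    define A where "A = ppow t (1 / (1 - d1)) (1 / (1 - d1'))"
    define B where "B = ppow t ((1 + d2 - d1) * (1 / (1 - d1))) ((1 + d2' - d1') * (1 / (1 - d1')))"
    have A0: "0 < A" unfolding A_def ppow_def using t by simp
    have Geq: "Gamma_delta d1 d1' d2 d2' \<phi> x = ppow \<bar>fst x\<bar> (2 * d1) (2 * d1') * (f' x (1, 0))^2 + ppow \<bar>fst x\<bar> (2 * d2) (2 * d2') * gradf f' x" for x
    proof -
      have "frechet_derivative \<phi> (at x) = blinfun_apply (f' x)" by (rule frechet_derivative_at[OF d, symmetric])
      thus ?thesis unfolding Gamma_delta_def Defs.d1_def grad2sq_def gradf_def by simp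
    qed
    have Cbox_eq: "Cbox d1 d1' d2 d2' t = {x. \<bar>fst x\<bar> < A \<and> snd x \<in> cube B}"
      unfolding Cbox_def Let_def A_def B_def mem_cube by simp
    have main: "1 / K * t powr (-2) * (LINT x:S|lborel. (\<phi> x - (LINT y:S|lborel. \<phi> y) / measure lborel S)^2)
         \<le> (LINT x:S|lborel. Gamma_delta d1 d1' d2 d2' \<phi> x)"
      if SS: "S = slab a b B" and aa: "a \<le> a'" and ab': "a' < b'" and bb: "b' \<le> b" and len: "b - a = 2 * (b' - a')"
        and hw1: "\<And>s x. s \<in> {a'<..<b'} \<Longrightarrow> x \<in> {a..s} \<Longrightarrow> (x - a)^2 \<le> x^2"
        and hw2: "\<And>s x. s \<in> {a'<..<b'} \<Longrightarrow> x \<in> {s..b} \<Longrightarrow> (x - b)^2 \<le> x^2"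
        and S1: "\<And>x::real \<times> (real^'m). x \<in> slab a b B \<Longrightarrow> 0 < \<bar>fst x\<bar> \<and> \<bar>fst x\<bar> < A"
        and S2: "\<And>x::real \<times> (real^'m). x \<in> slab a' b' B \<Longrightarrow> A / 2 \<le> \<bar>fst x\<bar> \<and> \<bar>fst x\<bar> \<le> A"
        and sub: "slab a' b' B \<subseteq> (slab a b B :: (real \<times> (real^'m)) set)"
      for S :: "(real \<times> (real^'m)) set" and a b a' b'
      unfolding Geq K_def
      by (rule case_lemma[OF assms t d cf A_def B_def aa ab' bb len hw1 hw2 S1 S2 sub SS])
    from C show "1 / K * t powr (-2) * (LINT x:C t|lborel. (\<phi> x - (LINT y:C t|lborel. \<phi> y) / measure lborel (C t))\<^sup>2)
        \<le> (LINT x:C t|lborel. Gamma_delta d1 d1' d2 d2' \<phi> x)"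
    proof (elim insertE emptyE)
      assume Ceq: "C = Cplus d1 d1' d2 d2'"
      show ?thesis unfolding Ceq
      proof (rule main[of "Cplus d1 d1' d2 d2' t" 0 A "A / 2" A])
        show "Cplus d1 d1' d2 d2' t = slab 0 A B"
          unfolding Cplus_def Cbox_eq slab_def by auto
        show "(0::real) \<le> A / 2" "A / 2 < A" "A \<le> A" "A - 0 = 2 * (A - A / 2)" using A0 by auto
        show "(x - 0)^2 \<le> x^2" for x :: real by simp
        show "(x - A)^2 \<le> x^2" if "s \<in> {A / 2<..<A}" "x \<in> {s..A}" for s x
          using sq_le1[of "A - x" x] that by (simp add: power2_commute)
        show "0 < \<bar>fst x\<bar> \<and> \<bar>fst x\<bar> < A" if "x \<in> slab 0 A B" for x :: "real \<times> (real^'m)"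
          using that unfolding slab_def by auto
        show "A / 2 \<le> \<bar>fst x\<bar> \<and> \<bar>fst x\<bar> \<le> A" if "x \<in> slab (A / 2) A B" for x :: "real \<times> (real^'m)"
          using that unfolding slab_def by auto
        show "slab (A / 2) A B \<subseteq> (slab 0 A B :: (real \<times> (real^'m)) set)"
          unfolding slab_def using A0 by auto
      qed
    next
      assume Ceq: "C = Cminus d1 d1' d2 d2'"
      show ?thesis unfolding Ceq
      proof (rule main[of "Cminus d1 d1' d2 d2' t" "- A" 0 "- A" "- A / 2"])
        show "Cminus d1 d1' d2 d2' t = slab (- A) 0 B"
          unfolding Cminus_def Cbox_eq slab_def by auto
        show "- A \<le> - A" "- A < - A / 2" "- A / 2 \<le> (0::real)" "0 - - A = 2 * (- A / 2 - - A)" using A0 by auto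
        show "(x - - A)^2 \<le> x^2" if "s \<in> {- A<..<- A / 2}" "x \<in> {- A..s}" for s x
          using sq_le1[of "x + A" "- x"] that by simp
        show "(x - 0)^2 \<le> x^2" for x :: real by simp
        show "0 < \<bar>fst x\<bar> \<and> \<bar>fst x\<bar> < A" if "x \<in> slab (- A) 0 B" for x :: "real \<times> (real^'m)"
          using that unfolding slab_def by auto
        show "A / 2 \<le> \<bar>fst x\<bar> \<and> \<bar>fst x\<bar> \<le> A" if "x \<in> slab (- A) (- A / 2) B" for x :: "real \<times> (real^'m)"
          using that unfolding slab_def by auto
        show "slab (- A) (- A / 2) B \<subseteq> (slab (- A) 0 B :: (real \<times> (real^'m)) set)"
          unfolding slab_def using A0 by auto
      qed
    qed
  qed
qed

end
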